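(* Let $P\subset\mathbb R^n$ be an $n$-dimensional strongly monotypic polytope, and let $X_1,\dots,X_k$ be a skeleton of its set of normals $X=N(P)$. Then for some sufficiently small $\epsilon>0$, $P$ can be covered by at most $|X_1|\cdot|X_2|\cdots|X_k|$ translates of $(1-\epsilon)P$. In particular, since $|X_1|\cdots|X_k|\le 2^n$, $P$ can be covered by at most $2^n$ translates of $(1-\epsilon)P$.
   Context: $N(P)$ is the set of outer unit normals of the facets of $P$. $\mathcal A(P)$ is the arrangement of hyperplanes containing the facets of $P$; $P$ is strongly monotypic if every polytope $Q$ with $N(Q)=N(P)$ has $\mathcal A(Q)$ combinatorially equivalent to $\mathcal A(P)$. A skeleton of a finite set $X\subset\mathbb R^n\setminus\{0\}$ is a collection of pairwise disjoint subsets $X_1,\dots,X_k\subseteq X$ such that each $X_i$ is the vertex set of a simplex whose relative interior contains $0$, and $\mathbb R^n=\operatorname{span}X_1\oplus\cdots\oplus\operatorname{span}X_k$. *)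

theory Defs
  imports "HOL-Analysis.Analysis"
begin

definition facet_normals :: "'a::euclidean_space set \<Rightarrow> 'a set" where
  "facet_normals P = {u. norm u = 1 \<and>
      (\<exists>F b. F facet_of P \<and> P \<subseteq> {x. u \<bullet> x \<le> b} \<and> F = P \<inter> {x. u \<bullet> x = b})}"

definition support_fn :: "'a::euclidean_space set \<Rightarrow> 'a \<Rightarrow> real" where
  "support_fn P u = Sup ((\<lambda>x. u \<bullet> x) ` P)"

text \<open>Combinatorial type of the facet-hyperplane arrangement A(P): the set of sign vectors
  (covectors) of all points of space w.r.t. the hyperplanes, labelled by their outer normals.\<close>
definition arrangement_covectors :: "'a::euclidean_space set \<Rightarrow> ('a \<Rightarrow> real) set" where
  "arrangement_covectors P =
     {(\<lambda>u. if u \<in> facet_normals P then sgn (u \<bullet> x - support_fn P u) else 0) | x. True}"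

definition strongly_monotypic :: "'a::euclidean_space set \<Rightarrow> bool" where
  "strongly_monotypic P \<longleftrightarrow>
     (\<forall>Q. polytope Q \<and> aff_dim Q = int DIM('a) \<and> facet_normals Q = facet_normals P
          \<longrightarrow> arrangement_covectors Q = arrangement_covectors P)"

definition is_skeleton :: "'a::euclidean_space set \<Rightarrow> nat \<Rightarrow> (nat \<Rightarrow> 'a set) \<Rightarrow> bool" where
  "is_skeleton X k Xs \<longleftrightarrow>
     (\<forall>i<k. Xs i \<subseteq> X) \<and>
     (\<forall>i<k. \<forall>j<k. i \<noteq> j \<longrightarrow> Xs i \<inter> Xs j = {}) \<and>
     (\<forall>i<k. finite (Xs i) \<and> Xs i \<noteq> {} \<and> \<not> affine_dependent (Xs i) \<and>
            0 \<in> rel_interior (convex hull (Xs i))) \<and>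
     (\<forall>v. \<exists>!f. (\<forall>i<k. f i \<in> span (Xs i)) \<and> (\<forall>i\<ge>k. f i = 0) \<and> v = (\<Sum>i<k. f i))"

end

theory Submission
  imports Defs
begin


lemma hyperplane_sub_parallel:
  fixes u u' :: "'a::euclidean_space"
  assumes u: "norm u = 1" and u': "norm u' = 1" and sub: "{x. u \<bullet> x = b} \<subseteq> {x. u' \<bullet> x = b'}"
  shows "u' = u \<or> u' = -u"
proof -
  have uu: "u \<bullet> u = 1" using u by (simp add: dot_square_norm)
  have x0: "b *\<^sub>R u \<in> {x. u \<bullet> x = b}" using uu by simp
  have orth: "u' \<bullet> v = 0" if "u \<bullet> v = 0" for v
  proof -
    have "b *\<^sub>R u + v \<in> {x. u \<bullet> x = b}" using uu that by (simp add: inner_add_right)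
    then have "u' \<bullet> (b *\<^sub>R u + v) = b'" using sub by blast
    moreover have "u' \<bullet> (b *\<^sub>R u) = b'" using sub x0 by blast
    ultimately show ?thesis by (simp add: inner_add_right)
  qed
  define r where "r = u' - (u' \<bullet> u) *\<^sub>R u"
  have "u \<bullet> r = 0" unfolding r_def using uu by (simp add: inner_diff_right inner_commute)
  then have "u' \<bullet> r = 0" by (rule orth)
  then have "r \<bullet> r = 0" unfolding r_def using \<open>u \<bullet> r = 0\<close>[unfolded r_def]
    by (simp add: inner_diff_left inner_diff_right algebra_simps)
  then have "r = 0" by simp
  then have eq: "u' = (u' \<bullet> u) *\<^sub>R u" unfolding r_def by simp
  then have "norm u' = \<bar>u' \<bullet> u\<bar>" using u by (metis norm_scaleR mult.right_neutral real_norm_def)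
  then have "\<bar>u' \<bullet> u\<bar> = 1" using u' by simp
  then have "u' \<bullet> u = 1 \<or> u' \<bullet> u = -1" by linarith
  then show ?thesis using eq by auto
qed

lemma facet_normal_unique:
  fixes S :: "'a::euclidean_space set"
  assumes full: "aff_dim S = int DIM('a)" and fac: "G facet_of S"
    and G1: "G = S \<inter> {x. u \<bullet> x = b}" and S1: "S \<subseteq> {x. u \<bullet> x \<le> b}"
    and G2: "G = S \<inter> {x. u' \<bullet> x = b'}" and S2: "S \<subseteq> {x. u' \<bullet> x \<le> b'}"
    and u: "norm u = 1" and u': "norm u' = 1"
  shows "u' = u"
proof -
  have "aff_dim G = aff_dim S - 1" using fac by (simp add: facet_of_def)
  then have "aff_dim G = int (DIM('a) - 1)" using full DIM_positive[where 'a='a] by simp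
  then obtain a c where a: "a \<noteq> 0" and ah: "affine hull G = {x. a \<bullet> x = c}"
    using aff_dim_eq_hyperplane by blast
  define a' where "a' = a /\<^sub>R norm a"
  define c' where "c' = c / norm a"
  have na: "norm a' = 1" using a by (simp add: a'_def)
  have hyp: "{x. a' \<bullet> x = c'} = {x. a \<bullet> x = c}"
    using a by (auto simp: a'_def c'_def field_simps)
  have "affine hull G \<subseteq> {x. u \<bullet> x = b}"
    using G1 by (intro hull_minimal) (auto simp: affine_hyperplane)
  then have "{x. a' \<bullet> x = c'} \<subseteq> {x. u \<bullet> x = b}" using hyp ah by simp
  then have "u = a' \<or> u = -a'" by (rule hyperplane_sub_parallel[OF na u])
  moreover have "affine hull G \<subseteq> {x. u' \<bullet> x = b'}"
    using G2 by (intro hull_minimal) (auto simp: affine_hyperplane)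
  then have "{x. a' \<bullet> x = c'} \<subseteq> {x. u' \<bullet> x = b'}" using hyp ah by simp
  then have "u' = a' \<or> u' = -a'" by (rule hyperplane_sub_parallel[OF na u'])
  ultimately have "u' = u \<or> u' = -u" by auto
  moreover have "u' \<noteq> -u"
  proof
    assume m: "u' = -u"
    obtain g where "g \<in> G" using fac by (auto simp: facet_of_def)
    then have "u \<bullet> g = b" "u' \<bullet> g = b'" using G1 G2 by auto
    then have "b' = -b" using m by simp
    then have "S \<subseteq> {x. u \<bullet> x = b}" using S1 S2 m by force
    then have "aff_dim S \<le> aff_dim {x. u \<bullet> x = b}" by (rule aff_dim_subset)
    also have "\<dots> = int (DIM('a) - 1)" using u by (intro aff_dim_hyperplane) auto
    finally show False using full DIM_positive[where 'a='a] by linarith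
  qed
  ultimately show ?thesis by blast
qed


locale fullpoly =
  fixes P :: "'a::euclidean_space set"
  assumes poly: "polytope P" and full: "aff_dim P = int DIM('a)"
begin

lemma P_nonempty: "P \<noteq> {}"
  using full aff_dim_empty[of P] by auto

lemma fn_mem:
  assumes "u \<in> facet_normals P"
  shows "norm u = 1" "\<And>z. z \<in> P \<Longrightarrow> u \<bullet> z \<le> support_fn P u"
    "\<exists>z\<in>P. u \<bullet> z = support_fn P u" "(P \<inter> {x. u \<bullet> x = support_fn P u}) facet_of P"
proof -
  obtain F b where F: "F facet_of P" "P \<subseteq> {x. u \<bullet> x \<le> b}" "F = P \<inter> {x. u \<bullet> x = b}"
    and n: "norm u = 1"
    using assms unfolding facet_normals_def by blast
  obtain z where z: "z \<in> F" using F(1) by (auto simp: facet_of_def)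
  have hb: "support_fn P u = b" unfolding support_fn_def
    by (rule cSup_eq_maximum) (use z F in auto)
  show "norm u = 1" by (rule n)
  show "\<And>z. z \<in> P \<Longrightarrow> u \<bullet> z \<le> support_fn P u" using F hb by auto
  show "\<exists>z\<in>P. u \<bullet> z = support_fn P u" using z F hb by auto
  show "(P \<inter> {x. u \<bullet> x = support_fn P u}) facet_of P" using F hb by simp
qed

lemma finite_fn: "finite (facet_normals P)"
proof -
  let ?f = "\<lambda>u. P \<inter> {x. u \<bullet> x = support_fn P u}"
  have "inj_on ?f (facet_normals P)"
  proof (rule inj_onI)
    fix u u' assume u: "u \<in> facet_normals P" and u': "u' \<in> facet_normals P" and eq: "?f u = ?f u'"
    have "u' = u"
      by (rule facet_normal_unique[OF full fn_mem(4)[OF u] refl _ eq])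
         (use fn_mem[OF u] fn_mem[OF u'] in auto)
    then show "u = u'" by simp
  qed
  moreover have "?f ` facet_normals P \<subseteq> {T. T facet_of P}" using fn_mem(4) by auto
  ultimately show ?thesis
    using finite_polytope_facets[OF poly] by (meson finite_imageD finite_subset)
qed

lemma P_rep: "P = {z. \<forall>u\<in>facet_normals P. u \<bullet> z \<le> support_fn P u}"
proof
  show "P \<subseteq> {z. \<forall>u\<in>facet_normals P. u \<bullet> z \<le> support_fn P u}" using fn_mem(2) by auto
next
  show "{z. \<forall>u\<in>facet_normals P. u \<bullet> z \<le> support_fn P u} \<subseteq> P"
  proof
    fix z assume z: "z \<in> {z. \<forall>u\<in>facet_normals P. u \<bullet> z \<le> support_fn P u}"
    obtain F where FF: "finite F \<and> P = affine hull P \<inter> \<Inter> F \<and>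
       (\<forall>h\<in>F. \<exists>a b. a \<noteq> 0 \<and> h = {x. a \<bullet> x \<le> b}) \<and>
       (\<forall>F'\<subset>F. P \<subset> affine hull P \<inter> \<Inter> F')"
      using iffD1[OF polyhedron_Int_affine_minimal polytope_imp_polyhedron[OF poly]] by (rule exE)
    have fF: "finite F" using FF by (rule conjunct1)
    have seq: "P = affine hull P \<inter> \<Inter> F" using FF by (rule conjunct1[OF conjunct2])
    have hs: "\<forall>h\<in>F. \<exists>a b. a \<noteq> 0 \<and> h = {x. a \<bullet> x \<le> b}"
      using FF by (rule conjunct1[OF conjunct2[OF conjunct2]])
    have mn: "\<forall>F'\<subset>F. P \<subset> affine hull P \<inter> \<Inter> F'"
      using FF by (rule conjunct2[OF conjunct2[OF conjunct2]])
    have ex: "\<forall>h\<in>F. \<exists>p. fst p \<noteq> 0 \<and> h = {x. fst p \<bullet> x \<le> snd p}"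
    proof
      fix h assume "h \<in> F"
      then obtain a b where "a \<noteq> 0 \<and> h = {x. a \<bullet> x \<le> b}" using hs by blast
      then show "\<exists>p. fst p \<noteq> 0 \<and> h = {x. fst p \<bullet> x \<le> snd p}" by (intro exI[of _ "(a,b)"]) simp
    qed
    from bchoice[OF ex] obtain g where g: "\<forall>h\<in>F. fst (g h) \<noteq> 0 \<and> h = {x. fst (g h) \<bullet> x \<le> snd (g h)}"
      by (rule exE)
    define a where "a = (\<lambda>h. fst (g h))"
    define b where "b = (\<lambda>h. snd (g h))"
    have ab: "\<And>h. h \<in> F \<Longrightarrow> a h \<noteq> 0 \<and> h = {x. a h \<bullet> x \<le> b h}"
      using g unfolding a_def b_def by blast
    have ahU: "affine hull P = UNIV" using full aff_dim_eq_full by blast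
    have psub: "\<And>F'. F' \<subset> F \<Longrightarrow> P \<subset> affine hull P \<inter> \<Inter> F'" using mn by (intro mn[rule_format])
    have PF: "P \<subseteq> \<Inter>F" by (rule subset_trans[OF equalityD1[OF seq]]) auto
    have "z \<in> hs" if hF: "hs \<in> F" for hs
    proof -
      have iff: "(P \<inter> {x. a hs \<bullet> x = b hs}) facet_of P \<longleftrightarrow>
          (\<exists>h. h \<in> F \<and> P \<inter> {x. a hs \<bullet> x = b hs} = P \<inter> {x. a h \<bullet> x = b h})"
        by (rule facet_of_polyhedron_explicit[OF fF seq ab psub])
      have fac: "(P \<inter> {x. a hs \<bullet> x = b hs}) facet_of P"
        using hF by (subst iff) blast
      have Psub: "P \<subseteq> {x. a hs \<bullet> x \<le> b hs}"
        using PF hF ab[OF hF] by blast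
      define u where "u = a hs /\<^sub>R norm (a hs)"
      define c where "c = b hs / norm (a hs)"
      have na: "norm (a hs) > 0" using ab[OF hF] by simp
      have e1: "{x. u \<bullet> x = c} = {x. a hs \<bullet> x = b hs}" using na
        by (auto simp: u_def c_def field_simps)
      have e2: "{x. u \<bullet> x \<le> c} = {x. a hs \<bullet> x \<le> b hs}" using na
        by (auto simp: u_def c_def field_simps)
      have nu: "norm u = 1" using na by (simp add: u_def)
      have fac': "(P \<inter> {x. u \<bullet> x = c}) facet_of P" using fac e1 by simp
      have Psub': "P \<subseteq> {x. u \<bullet> x \<le> c}" using Psub e2 by simp
      have uX: "u \<in> facet_normals P" unfolding facet_normals_def
        using fac' Psub' nu by blast
      obtain y where y: "y \<in> P" "u \<bullet> y = support_fn P u" using fn_mem(3)[OF uX] by blast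
      obtain w where w: "w \<in> P \<inter> {x. u \<bullet> x = c}" using fac' by (auto simp: facet_of_def)
      have "support_fn P u \<le> c" using y Psub' by auto
      moreover have "c \<le> support_fn P u" using w fn_mem(2)[OF uX] by force
      ultimately have "support_fn P u = c" by simp
      then have "u \<bullet> z \<le> c" using z uX by auto
      then show ?thesis using e2 ab[OF hF] by blast
    qed
    then have "z \<in> affine hull P \<inter> \<Inter>F" using ahU by blast
    moreover have "affine hull P \<inter> \<Inter>F \<subseteq> P" by (rule equalityD2[OF seq])
    ultimately show "z \<in> P" by blast
  qed
qed

lemma interior_pt: "\<exists>p0. \<forall>u\<in>facet_normals P. u \<bullet> p0 < support_fn P u"
proof -
  have ahU: "affine hull P = UNIV" using full aff_dim_eq_full by blast
  have "rel_interior P \<noteq> {}" using rel_interior_eq_empty polytope_imp_convex[OF poly] P_nonempty by blast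
  then obtain p0 where "p0 \<in> interior P" using rel_interior_interior[OF ahU] by auto
  then obtain e where e: "e > 0" "ball p0 e \<subseteq> P" using mem_interior by blast
  have "u \<bullet> p0 < support_fn P u" if uX: "u \<in> facet_normals P" for u
  proof -
    have nu: "norm u = 1" using fn_mem(1)[OF uX] .
    have "p0 + (e/2) *\<^sub>R u \<in> ball p0 e" using e nu by (simp add: dist_norm)
    then have "u \<bullet> (p0 + (e/2) *\<^sub>R u) \<le> support_fn P u" using e fn_mem(2)[OF uX] by blast
    moreover have "u \<bullet> u = 1" using nu by (simp add: dot_square_norm)
    ultimately show ?thesis using e by (simp add: inner_add_right)
  qed
  then show ?thesis by blast
qed

end


lemma sum_if_remove:
  assumes "finite S" "c \<in> S"
  shows "(\<Sum>x\<in>S. (if x = c then 0 else f x)) = (\<Sum>x\<in>S - {c}. f x)"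
proof -
  have "(\<Sum>x\<in>S. (if x = c then 0 else f x)) = (if c = c then 0 else f c) + (\<Sum>x\<in>S - {c}. (if x = c then 0 else f x))"
    by (rule sum.remove[OF assms])
  also have "\<dots> = (\<Sum>x\<in>S - {c}. f x)"
    using sum.cong[of "S-{c}" "S-{c}" "\<lambda>x. if x = c then 0 else f x" f] by simp
  finally show ?thesis .
qed

lemma simplex_indep:
  fixes S :: "'a::euclidean_space set"
  assumes fin: "finite S" and ind: "\<not> affine_dependent S" and pos: "\<forall>x\<in>S. 0 < \<alpha> x"
    and s1: "sum \<alpha> S = 1" and s0: "(\<Sum>x\<in>S. \<alpha> x *\<^sub>R x) = 0" and c: "c \<in> S"
  shows "independent (S - {c})"
proof -
  have "\<not> dependent (S - {c})"
  proof
    assume "dependent (S - {c})"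
    then obtain \<beta> where \<beta>: "\<exists>v\<in>S-{c}. \<beta> v \<noteq> 0" "(\<Sum>v\<in>S-{c}. \<beta> v *\<^sub>R v) = 0"
      using dependent_finite[of "S - {c}"] fin by auto
    define t where "t = sum \<beta> (S - {c})"
    define \<gamma> where "\<gamma> = (\<lambda>x. (if x = c then 0 else \<beta> x) - t * \<alpha> x)"
    have "sum \<gamma> S = (\<Sum>x\<in>S. (if x = c then 0 else \<beta> x)) - t * sum \<alpha> S"
      unfolding \<gamma>_def by (simp add: sum_subtractf sum_distrib_left)
    also have "\<dots> = 0" using s1 sum_if_remove[OF fin c, of \<beta>] t_def by simp
    finally have g1: "sum \<gamma> S = 0" .
    have "(\<Sum>x\<in>S. \<gamma> x *\<^sub>R x) = (\<Sum>x\<in>S. (if x = c then 0 else \<beta> x *\<^sub>R x)) - t *\<^sub>R (\<Sum>x\<in>S. \<alpha> x *\<^sub>R x)"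
      unfolding \<gamma>_def by (simp add: scaleR_diff_left sum_subtractf scaleR_sum_right if_distrib[of "\<lambda>r. r *\<^sub>R _"] cong: if_cong)
    also have "\<dots> = 0" using s0 sum_if_remove[OF fin c, of "\<lambda>x. \<beta> x *\<^sub>R x"] \<beta>(2) by simp
    finally have g2: "(\<Sum>x\<in>S. \<gamma> x *\<^sub>R x) = 0" .
    have g0: "\<forall>v\<in>S. \<gamma> v = 0"
    proof (rule ccontr)
      assume "\<not> (\<forall>v\<in>S. \<gamma> v = 0)"
      then have "\<exists>U. sum U S = 0 \<and> (\<exists>v\<in>S. U v \<noteq> 0) \<and> (\<Sum>v\<in>S. U v *\<^sub>R v) = 0"
        using g1 g2 by (intro exI[of _ \<gamma>]) auto
      then show False using ind affine_dependent_explicit_finite[OF fin] by simp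
    qed
    then have "\<gamma> c = 0" using c by blast
    moreover have "\<alpha> c \<noteq> 0" using pos c by force
    ultimately have "t = 0" unfolding \<gamma>_def by simp
    then have "\<forall>v\<in>S-{c}. \<beta> v = 0"
    proof (intro ballI)
      fix v assume t0: "t = 0" and v: "v \<in> S - {c}"
      then have "\<gamma> v = 0" using g0 by blast
      then show "\<beta> v = 0" using v t0 unfolding \<gamma>_def by simp
    qed
    then show False using \<beta>(1) by blast
  qed
  then show ?thesis by simp
qed

lemma simplex_span:
  fixes S :: "'a::euclidean_space set"
  assumes fin: "finite S" and pos: "\<forall>x\<in>S. 0 < \<alpha> x"
    and s0: "(\<Sum>x\<in>S. \<alpha> x *\<^sub>R x) = 0" and c: "c \<in> S"
  shows "S \<subseteq> span (S - {c})"
proof -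
  have sr: "(\<Sum>x\<in>S. \<alpha> x *\<^sub>R x) = \<alpha> c *\<^sub>R c + (\<Sum>x\<in>S - {c}. \<alpha> x *\<^sub>R x)"
    by (rule sum.remove[OF fin c])
  have "\<alpha> c *\<^sub>R c + (\<Sum>x\<in>S - {c}. \<alpha> x *\<^sub>R x) = 0"
    using s0 sr by simp
  then have e: "\<alpha> c *\<^sub>R c = - (\<Sum>x\<in>S - {c}. \<alpha> x *\<^sub>R x)"
    by (simp add: eq_neg_iff_add_eq_0)
  have ac: "\<alpha> c \<noteq> 0" using pos c by force
  have "c = inverse (\<alpha> c) *\<^sub>R (\<alpha> c *\<^sub>R c)" using ac by simp
  also have "\<dots> = inverse (\<alpha> c) *\<^sub>R (- (\<Sum>x\<in>S - {c}. \<alpha> x *\<^sub>R x))" by (simp only: e)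
  finally have ce: "c = inverse (\<alpha> c) *\<^sub>R (- (\<Sum>x\<in>S - {c}. \<alpha> x *\<^sub>R x))" .
  have "(\<Sum>x\<in>S - {c}. \<alpha> x *\<^sub>R x) \<in> span (S - {c})"
    by (intro span_sum span_scale span_base) auto
  then have "inverse (\<alpha> c) *\<^sub>R (- (\<Sum>x\<in>S - {c}. \<alpha> x *\<^sub>R x)) \<in> span (S - {c})"
    by (intro span_scale span_neg)
  then have cs: "c \<in> span (S - {c})" by (simp only: ce[symmetric])
  show ?thesis
  proof
    fix x assume x: "x \<in> S"
    show "x \<in> span (S - {c})"
    proof (cases "x = c")
      case True then show ?thesis using cs by simp
    next
      case False then show ?thesis using x by (intro span_base) simp
    qed
  qed
qed

lemma simplex_shift:
  fixes S :: "'a::euclidean_space set"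
  assumes fin: "finite S" and pos: "\<forall>x\<in>S. 0 < \<alpha> x"
    and s0: "(\<Sum>x\<in>S. \<alpha> x *\<^sub>R x) = 0" and ne: "S \<noteq> {}"
  shows "\<exists>l c. c \<in> S \<and> l c = 0 \<and> (\<forall>y\<in>S. 0 \<le> l y) \<and> (\<Sum>y\<in>S. l y *\<^sub>R y) = (\<Sum>y\<in>S. a y *\<^sub>R y)"
proof -
  define t where "t = Max ((\<lambda>y. - a y / \<alpha> y) ` S)"
  have "t \<in> (\<lambda>y. - a y / \<alpha> y) ` S" unfolding t_def using fin ne by (intro Max_in) auto
  then obtain c where c: "c \<in> S" "t = - a c / \<alpha> c" by auto
  have le: "- a y / \<alpha> y \<le> t" if "y \<in> S" for y unfolding t_def using fin that by (intro Max_ge) auto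
  define l where "l = (\<lambda>y. a y + t * \<alpha> y)"
  have "\<alpha> c \<noteq> 0" using pos c by force
  then have "l c = 0" using c unfolding l_def by simp
  moreover have "\<forall>y\<in>S. 0 \<le> l y"
  proof
    fix y assume y: "y \<in> S"
    have ay: "\<alpha> y > 0" using pos y by blast
    have "(- a y / \<alpha> y) * \<alpha> y \<le> t * \<alpha> y" using le[OF y] ay by (intro mult_right_mono) auto
    moreover have "(- a y / \<alpha> y) * \<alpha> y = - a y" using ay by simp
    ultimately have "- a y \<le> t * \<alpha> y" by linarith
    then show "0 \<le> l y" unfolding l_def by simp
  qed
  moreover have "(\<Sum>y\<in>S. l y *\<^sub>R y) = (\<Sum>y\<in>S. a y *\<^sub>R y) + t *\<^sub>R (\<Sum>y\<in>S. \<alpha> y *\<^sub>R y)"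
    unfolding l_def by (simp add: scaleR_add_left sum.distrib scaleR_sum_right)
  ultimately show ?thesis using c s0 by auto
qed


locale skel = fullpoly P for P :: "'a::euclidean_space set" +
  fixes k :: nat and Xs :: "nat \<Rightarrow> 'a set"
  assumes skel: "is_skeleton (facet_normals P) k Xs"
begin

definition Ch where "Ch = PiE {..<k} Xs"
definition Bc where "Bc c = (\<Union>i<k. Xs i - {c i})"
definition Y where "Y = (\<Union>i<k. Xs i)"

lemma sk:
  assumes "i < k"
  shows "Xs i \<subseteq> facet_normals P" "finite (Xs i)" "Xs i \<noteq> {}" "\<not> affine_dependent (Xs i)"
    "0 \<in> rel_interior (convex hull (Xs i))"
  using skel assms unfolding is_skeleton_def by auto

lemma sk_disj: "i < k \<Longrightarrow> j < k \<Longrightarrow> i \<noteq> j \<Longrightarrow> Xs i \<inter> Xs j = {}"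
  using skel unfolding is_skeleton_def by auto

lemma sk_uniq: "\<exists>!f. (\<forall>i<k. f i \<in> span (Xs i)) \<and> (\<forall>i\<ge>k. f i = 0) \<and> v = (\<Sum>i<k. f i)"
proof -
  have "\<forall>v. \<exists>!f. (\<forall>i<k. f i \<in> span (Xs i)) \<and> (\<forall>i\<ge>k. f i = 0) \<and> v = (\<Sum>i<k. f i)"
    using skel unfolding is_skeleton_def by (elim conjE)
  then show ?thesis by (rule spec)
qed

lemma alpha_ex:
  assumes "i < k"
  shows "\<exists>a. (\<forall>x\<in>Xs i. 0 < a x) \<and> sum a (Xs i) = 1 \<and> (\<Sum>x\<in>Xs i. a x *\<^sub>R x) = 0"
proof -
  have "0 \<in> {y. \<exists>u. (\<forall>x\<in>Xs i. 0 < u x) \<and> sum u (Xs i) = 1 \<and> (\<Sum>x\<in>Xs i. u x *\<^sub>R x) = y}"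
    using sk(5)[OF assms] unfolding rel_interior_convex_hull_explicit[OF sk(4)[OF assms]] .
  then show ?thesis by (simp only: mem_Collect_eq)
qed

definition al where
  "al i = (SOME a. (\<forall>x\<in>Xs i. 0 < a x) \<and> sum a (Xs i) = 1 \<and> (\<Sum>x\<in>Xs i. a x *\<^sub>R x) = 0)"

lemma al:
  assumes "i < k"
  shows "\<forall>x\<in>Xs i. 0 < al i x" "sum (al i) (Xs i) = 1" "(\<Sum>x\<in>Xs i. al i x *\<^sub>R x) = 0"
  using someI_ex[OF alpha_ex[OF assms]] unfolding al_def by auto

lemma decomp_ex: "\<exists>f. (\<forall>i<k. f i \<in> span (Xs i)) \<and> v = (\<Sum>i<k. f i)"
  using sk_uniq[of v] by blast

lemma decomp_zero:
  assumes f: "\<forall>i<k. f i \<in> span (Xs i)" and s: "(\<Sum>i<k. f i) = 0" and i: "i < k"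
  shows "f i = 0"
proof -
  define g where "g = (\<lambda>i. if i < k then f i else 0)"
  have gs: "(\<Sum>i<k. g i) = (\<Sum>i<k. f i)" unfolding g_def by (rule sum.cong) auto
  have P1: "(\<forall>i<k. g i \<in> span (Xs i)) \<and> (\<forall>i\<ge>k. g i = 0) \<and> 0 = (\<Sum>i<k. g i)"
    using f s gs unfolding g_def by auto
  have P2: "(\<forall>i<k. (\<lambda>i. 0::'a) i \<in> span (Xs i)) \<and> (\<forall>i\<ge>k. (\<lambda>i. 0::'a) i = 0) \<and> 0 = (\<Sum>i<k. (\<lambda>i. 0::'a) i)"
    by (auto simp: span_zero)
  obtain f0 where f0: "\<forall>y. (\<forall>i<k. y i \<in> span (Xs i)) \<and> (\<forall>i\<ge>k. y i = 0) \<and> 0 = (\<Sum>i<k. y i) \<longrightarrow> y = f0"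
    using sk_uniq[of 0] by (rule ex1E)
  have "g = f0" using f0[rule_format, OF P1] .
  moreover have "(\<lambda>i. 0::'a) = f0" using f0[rule_format, OF P2] .
  ultimately have "g = (\<lambda>i. 0)" by simp
  from fun_cong[OF this, of i] show ?thesis using i unfolding g_def by simp
qed

lemma Bc_sub_Y: "Bc c \<subseteq> Y" unfolding Bc_def Y_def by blast
lemma Y_sub: "Y \<subseteq> facet_normals P" unfolding Y_def using sk(1) by blast
lemma finite_Y: "finite Y" unfolding Y_def using sk(2) by blast
lemma finite_Bc: "finite (Bc c)" using finite_subset[OF Bc_sub_Y finite_Y] .

lemma Ch_mem: "c \<in> Ch \<Longrightarrow> i < k \<Longrightarrow> c i \<in> Xs i" unfolding Ch_def by auto

lemma sum_Bc:
  "sum g (Bc c) = (\<Sum>i<k. sum g (Xs i - {c i}))"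
  unfolding Bc_def
  by (rule sum.UNION_disjoint) (use sk(2) sk_disj in auto)

lemma sum_Y:
  "sum g Y = (\<Sum>i<k. sum g (Xs i))"
  unfolding Y_def
  by (rule sum.UNION_disjoint) (use sk(2) sk_disj in auto)

lemma Bc_indep:
  assumes c: "c \<in> Ch"
  shows "independent (Bc c)"
proof
  assume "dependent (Bc c)"
  then obtain u where u: "\<exists>v\<in>Bc c. u v \<noteq> 0" "(\<Sum>v\<in>Bc c. u v *\<^sub>R v) = 0"
    using dependent_finite[OF finite_Bc] by blast
  define f where "f = (\<lambda>i. \<Sum>v\<in>Xs i - {c i}. u v *\<^sub>R v)"
  have fs: "\<forall>i<k. f i \<in> span (Xs i)"
    unfolding f_def by (intro allI impI span_sum span_scale span_base) auto
  have "(\<Sum>i<k. f i) = 0" using u(2) unfolding f_def by (simp add: sum_Bc)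
  then have f0: "f i = 0" if "i < k" for i using decomp_zero[OF fs _ that] by blast
  obtain v where v: "v \<in> Bc c" "u v \<noteq> 0" using u(1) by blast
  then obtain i where i: "i < k" "v \<in> Xs i - {c i}" unfolding Bc_def by blast
  have ind: "independent (Xs i - {c i})"
    using simplex_indep[OF sk(2)[OF i(1)] sk(4)[OF i(1)] al[OF i(1)] Ch_mem[OF c i(1)]] .
  have "\<not> (\<exists>w. (\<exists>v\<in>Xs i - {c i}. w v \<noteq> 0) \<and> (\<Sum>v\<in>Xs i - {c i}. w v *\<^sub>R v) = 0)"
    using ind dependent_finite[of "Xs i - {c i}"] sk(2)[OF i(1)] by auto
  moreover have "(\<Sum>v\<in>Xs i - {c i}. u v *\<^sub>R v) = 0" using f0[OF i(1)] unfolding f_def .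
  ultimately show False using i v by blast
qed

lemma Bc_span:
  assumes c: "c \<in> Ch"
  shows "span (Bc c) = UNIV"
proof -
  have "v \<in> span (Bc c)" for v
  proof -
    obtain f where f: "\<forall>i<k. f i \<in> span (Xs i)" "v = (\<Sum>i<k. f i)" using decomp_ex by blast
    have "f i \<in> span (Bc c)" if i: "i < k" for i
    proof -
      have "Xs i \<subseteq> span (Xs i - {c i})"
        using simplex_span[OF sk(2)[OF i] al(1)[OF i] al(3)[OF i] Ch_mem[OF c i]] .
      then have "span (Xs i) \<subseteq> span (Xs i - {c i})" by (rule span_minimal[OF _ subspace_span])
      also have "\<dots> \<subseteq> span (Bc c)" by (rule span_mono) (use i in \<open>auto simp: Bc_def\<close>)
      finally show ?thesis using f(1) i by blast
    qed
    then show ?thesis unfolding f(2) by (intro span_sum) auto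
  qed
  then show ?thesis by auto
qed

end


lemma le_pow2: "1 \<le> m \<Longrightarrow> m \<le> (2::nat) ^ (m - 1)"
proof (induction m)
  case 0 then show ?case by simp
next
  case (Suc m)
  show ?case
  proof (cases "m = 0")
    case True then show ?thesis by simp
  next
    case False
    then have "m \<le> 2 ^ (m - 1)" using Suc by simp
    moreover have "1 \<le> (2::nat) ^ (m - 1)" by simp
    ultimately have "Suc m \<le> 2 * 2 ^ (m - 1)" by linarith
    also have "\<dots> = 2 ^ (Suc m - 1)" using False by (cases m) auto
    finally show ?thesis .
  qed
qed

context skel
begin

definition vert where "vert g c = (THE w. \<forall>y\<in>Bc c. y \<bullet> w = g y)"

lemma vert_uniq:
  assumes c: "c \<in> Ch" and w1: "\<forall>y\<in>Bc c. y \<bullet> w1 = g y" and w2: "\<forall>y\<in>Bc c. y \<bullet> w2 = g y"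
  shows "w1 = w2"
proof -
  define d where "d = w1 - w2"
  have od: "orthogonal d y" if "y \<in> Bc c" for y
  proof -
    have "y \<bullet> w1 = g y" "y \<bullet> w2 = g y" using w1 w2 that by auto
    then have "y \<bullet> d = 0" unfolding d_def by (simp add: inner_diff_right)
    then show ?thesis by (simp add: orthogonal_def inner_commute)
  qed
  have dsp: "d \<in> span (Bc c)" using Bc_span[OF c] by simp
  have "orthogonal d d" by (rule orthogonal_to_span[OF dsp od])
  then have "d = 0" by (simp add: orthogonal_def)
  then show ?thesis unfolding d_def by simp
qed

lemma vert_ex:
  assumes c: "c \<in> Ch"
  shows "\<exists>w. \<forall>y\<in>Bc c. y \<bullet> w = g y"
proof -
  obtain l :: "'a \<Rightarrow> real" where l: "linear l" "\<forall>x\<in>Bc c. l x = g x"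
    using linear_independent_extend[OF Bc_indep[OF c]] by blast
  define w where "w = (\<Sum>e\<in>Basis. l e *\<^sub>R e)"
  have "y \<bullet> w = g y" if y: "y \<in> Bc c" for y
  proof -
    have "y \<bullet> w = (\<Sum>e\<in>Basis. l e * (y \<bullet> e))" unfolding w_def by (simp add: inner_sum_right)
    also have "\<dots> = l (\<Sum>e\<in>Basis. (y \<bullet> e) *\<^sub>R e)"
      by (simp add: linear_sum[OF l(1)] linear_scale[OF l(1)] mult.commute)
    also have "\<dots> = l y" by (simp add: euclidean_representation)
    finally show ?thesis using l(2) y by simp
  qed
  then show ?thesis by blast
qed

lemma vert:
  assumes c: "c \<in> Ch" shows "\<forall>y\<in>Bc c. y \<bullet> vert g c = g y"
proof -
  have "\<exists>!w. \<forall>y\<in>Bc c. y \<bullet> w = g y"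
    using vert_ex[OF c] vert_uniq[OF c] by blast
  then show ?thesis unfolding vert_def by (rule theI')
qed

lemma vert_eq:
  assumes c: "c \<in> Ch" and w: "\<forall>y\<in>Bc c. y \<bullet> w = g y" shows "vert g c = w"
  by (rule vert_uniq[OF c vert[OF c] w])

definition ind where "ind y = (THE i. i < k \<and> y \<in> Xs i)"

lemma ind: assumes "i < k" "y \<in> Xs i" shows "ind y = i"
  unfolding ind_def
proof (rule the_equality)
  show "i < k \<and> y \<in> Xs i" using assms by simp
  fix j assume "j < k \<and> y \<in> Xs j"
  then show "j = i" using sk_disj[of i j] assms by blast
qed

lemma rep:
  "\<exists>l c. c \<in> Ch \<and> (\<forall>y. 0 \<le> l y) \<and> (\<forall>y. l y \<noteq> 0 \<longrightarrow> y \<in> Bc c) \<and> v = (\<Sum>y\<in>Y. l y *\<^sub>R y)"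
proof -
  obtain f where f: "\<forall>i<k. f i \<in> span (Xs i)" "v = (\<Sum>i<k. f i)" using decomp_ex by blast
  have ex: "\<forall>i\<in>{..<k}. \<exists>p. snd p \<in> Xs i \<and> fst p (snd p) = 0 \<and> (\<forall>y\<in>Xs i. 0 \<le> fst p y)
            \<and> (\<Sum>y\<in>Xs i. fst p y *\<^sub>R y) = f i"
  proof
    fix i assume "i \<in> {..<k}"
    then have i: "i < k" by simp
    have "f i \<in> range (\<lambda>u. \<Sum>v\<in>Xs i. u v *\<^sub>R v)"
      using f(1) i span_finite[OF sk(2)[OF i]] by blast
    then obtain a where a: "f i = (\<Sum>v\<in>Xs i. a v *\<^sub>R v)" by blast
    obtain l ci where lc: "ci \<in> Xs i" "l ci = 0" "\<forall>y\<in>Xs i. 0 \<le> l y"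
      "(\<Sum>y\<in>Xs i. l y *\<^sub>R y) = (\<Sum>y\<in>Xs i. a y *\<^sub>R y)"
      using simplex_shift[OF sk(2)[OF i] al(1)[OF i] al(3)[OF i] sk(3)[OF i], of a] by blast
    show "\<exists>p. snd p \<in> Xs i \<and> fst p (snd p) = 0 \<and> (\<forall>y\<in>Xs i. 0 \<le> fst p y)
            \<and> (\<Sum>y\<in>Xs i. fst p y *\<^sub>R y) = f i"
      by (rule exI[of _ "(l, ci)"]) (use lc a in simp)
  qed
  from bchoice[OF ex] obtain LC where LC: "\<forall>i\<in>{..<k}. snd (LC i) \<in> Xs i \<and> fst (LC i) (snd (LC i)) = 0
      \<and> (\<forall>y\<in>Xs i. 0 \<le> fst (LC i) y) \<and> (\<Sum>y\<in>Xs i. fst (LC i) y *\<^sub>R y) = f i"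
    by (rule exE)
  define l where "l = (\<lambda>y. if y \<in> Y then fst (LC (ind y)) y else 0)"
  define c where "c = restrict (\<lambda>i. snd (LC i)) {..<k}"
  have cC: "c \<in> Ch" unfolding Ch_def c_def using LC by auto
  have lXi: "l y = fst (LC i) y" if "i < k" "y \<in> Xs i" for i y
    using that ind[OF that] unfolding l_def Y_def by auto
  have "0 \<le> l y" for y
  proof (cases "y \<in> Y")
    case True
    then obtain i where i: "i < k" "y \<in> Xs i" unfolding Y_def by blast
    then show ?thesis using lXi[OF i] LC by auto
  next
    case False then show ?thesis unfolding l_def by simp
  qed
  moreover have "y \<in> Bc c" if ly: "l y \<noteq> 0" for y
  proof -
    have "y \<in> Y" using ly unfolding l_def by (auto split: if_splits)
    then obtain i where i: "i < k" "y \<in> Xs i" unfolding Y_def by blast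
    have "y \<noteq> c i"
    proof
      assume "y = c i"
      then have "y = snd (LC i)" using i unfolding c_def by simp
      then have "l y = 0" using lXi[OF i] LC i by auto
      then show False using ly by simp
    qed
    then show ?thesis using i unfolding Bc_def by blast
  qed
  moreover have "v = (\<Sum>y\<in>Y. l y *\<^sub>R y)"
  proof -
    have "(\<Sum>y\<in>Y. l y *\<^sub>R y) = (\<Sum>i<k. \<Sum>y\<in>Xs i. l y *\<^sub>R y)" by (rule sum_Y)
    also have "\<dots> = (\<Sum>i<k. f i)"
    proof (rule sum.cong[OF refl])
      fix i assume "i \<in> {..<k}"
      then have i: "i < k" by simp
      have "(\<Sum>y\<in>Xs i. l y *\<^sub>R y) = (\<Sum>y\<in>Xs i. fst (LC i) y *\<^sub>R y)"
        by (rule sum.cong[OF refl]) (simp add: lXi[OF i])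
      also have "\<dots> = f i" using LC i by auto
      finally show "(\<Sum>y\<in>Xs i. l y *\<^sub>R y) = f i" .
    qed
    finally show ?thesis using f(2) by simp
  qed
  ultimately show ?thesis using cC by blast
qed

lemma Ch_ne: "Ch \<noteq> {}"
  unfolding Ch_def using sk(3) by (auto simp: PiE_eq_empty_iff)

lemma prod_bound: "(\<Prod>i<k. card (Xs i)) \<le> 2 ^ DIM('a)"
proof -
  obtain c where c: "c \<in> Ch" using Ch_ne by blast
  have "card (Bc c) = (\<Sum>i<k. card (Xs i - {c i}))"
    unfolding Bc_def by (rule card_UN_disjoint) (use sk(2) sk_disj in auto)
  also have "\<dots> = (\<Sum>i<k. card (Xs i) - 1)"
    by (rule sum.cong[OF refl]) (use Ch_mem[OF c] in \<open>auto simp: card_Diff_singleton\<close>)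
  finally have cb: "card (Bc c) = (\<Sum>i<k. card (Xs i) - 1)" .
  have "card (Bc c) \<le> DIM('a)" using independent_bound[OF Bc_indep[OF c]] by simp
  have "(\<Prod>i<k. card (Xs i)) \<le> (\<Prod>i<k. (2::nat) ^ (card (Xs i) - 1))"
  proof (rule prod_mono)
    fix i assume "i \<in> {..<k}"
    then have i: "i < k" by simp
    have "1 \<le> card (Xs i)" using sk(2)[OF i] sk(3)[OF i] by (simp add: Suc_leI card_gt_0_iff)
    then show "0 \<le> card (Xs i) \<and> card (Xs i) \<le> 2 ^ (card (Xs i) - 1)" using le_pow2 by simp
  qed
  also have "\<dots> = 2 ^ (\<Sum>i<k. card (Xs i) - 1)" by (simp add: power_sum)
  also have "\<dots> \<le> 2 ^ DIM('a)"
    using cb \<open>card (Bc c) \<le> DIM('a)\<close> by (intro power_increasing) auto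
  finally show ?thesis .
qed

definition Dd where "Dd i = (\<Sum>y\<in>Xs i. al i y * support_fn P y)"

lemma slack_id:
  assumes i: "i < k"
  shows "(\<Sum>y\<in>Xs i. al i y * (support_fn P y - y \<bullet> x)) = Dd i"
proof -
  have "(\<Sum>y\<in>Xs i. al i y * (y \<bullet> x)) = (\<Sum>y\<in>Xs i. al i y *\<^sub>R y) \<bullet> x"
    by (simp add: inner_sum_left)
  also have "\<dots> = 0" using al(3)[OF i] by simp
  finally have z: "(\<Sum>y\<in>Xs i. al i y * (y \<bullet> x)) = 0" .
  have "(\<Sum>y\<in>Xs i. al i y * (support_fn P y - y \<bullet> x))
      = (\<Sum>y\<in>Xs i. al i y * support_fn P y) - (\<Sum>y\<in>Xs i. al i y * (y \<bullet> x))"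
    by (simp add: right_diff_distrib sum_subtractf)
  then show ?thesis using z unfolding Dd_def by simp
qed

lemma Dd_pos:
  assumes i: "i < k" shows "0 < Dd i"
proof -
  obtain p0 where p0: "\<forall>u\<in>facet_normals P. u \<bullet> p0 < support_fn P u" using interior_pt by blast
  have "0 < (\<Sum>y\<in>Xs i. al i y * (support_fn P y - y \<bullet> p0))"
  proof (rule sum_pos[OF sk(2)[OF i] sk(3)[OF i]])
    fix y assume y: "y \<in> Xs i"
    then have "0 < al i y" using al(1)[OF i] by blast
    moreover have "0 < support_fn P y - y \<bullet> p0" using p0 sk(1)[OF i] y by force
    ultimately show "0 < al i y * (support_fn P y - y \<bullet> p0)" by simp
  qed
  then show ?thesis using slack_id[OF i] by simp
qed

lemma two:
  assumes i: "i < k" and y: "y \<in> Xs i"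
  shows "\<exists>y'\<in>Xs i. y' \<noteq> y"
proof (rule ccontr)
  assume "\<not> (\<exists>y'\<in>Xs i. y' \<noteq> y)"
  then have e: "Xs i = {y}" using y by blast
  then have "al i y = 1" using al(2)[OF i] by simp
  moreover have "al i y *\<^sub>R y = 0" using al(3)[OF i] e by simp
  ultimately have "y = 0" by simp
  moreover have "norm y = 1" using fn_mem(1) sk(1)[OF i] y by blast
  ultimately show False by simp
qed

end


lemma pos_lower_bound:
  assumes "finite S" "\<forall>s\<in>S. (0::real) < f s"
  shows "\<exists>d>0. \<forall>s\<in>S. d \<le> f s"
  using assms
proof (induction S rule: finite_induct)
  case empty then show ?case by (intro exI[of _ 1]) auto
next
  case (insert x F)
  then obtain d where d: "d > 0" "\<forall>s\<in>F. d \<le> f s" by auto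
  have "0 < f x" using insert by auto
  then show ?case using d by (intro exI[of _ "min d (f x)"]) auto
qed

lemma unit_inner_lt:
  fixes u u' :: "'a::real_inner"
  assumes "norm u = 1" "norm u' = 1" "u' \<noteq> u"
  shows "u' \<bullet> u < 1"
proof -
  have "0 < norm (u' - u) ^ 2" using assms by simp
  also have "norm (u' - u) ^ 2 = (u' - u) \<bullet> (u' - u)" by (simp add: power2_norm_eq_inner)
  also have "\<dots> = u' \<bullet> u' + u \<bullet> u - 2 * (u' \<bullet> u)"
    by (simp add: inner_diff_left inner_diff_right inner_commute)
  also have "u' \<bullet> u' = 1" using assms by (simp add: dot_square_norm)
  also have "u \<bullet> u = 1" using assms by (simp add: dot_square_norm)
  finally show ?thesis by simp
qed

lemma strict_ball:
  fixes q :: "'a::euclidean_space"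
  assumes "finite U" "\<forall>u\<in>U. norm u = 1 \<and> u \<bullet> q < b u"
  shows "\<exists>d>0. \<forall>x. norm (x - q) < d \<longrightarrow> (\<forall>u\<in>U. u \<bullet> x < b u)"
proof -
  obtain d where d: "d > 0" "\<forall>u\<in>U. d \<le> b u - u \<bullet> q"
    using pos_lower_bound[OF assms(1), of "\<lambda>u. b u - u \<bullet> q"] assms(2) by auto
  have "u \<bullet> x < b u" if x: "norm (x - q) < d" and u: "u \<in> U" for x u
  proof -
    have "u \<bullet> (x - q) \<le> norm u * norm (x - q)" by (rule norm_cauchy_schwarz)
    also have "\<dots> = norm (x - q)" using assms(2) u by simp
    finally have "u \<bullet> x - u \<bullet> q < d" using x by (simp add: inner_diff_right)
    then show ?thesis using d u by fastforce
  qed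
  then show ?thesis using d by blast
qed

lemma sum_mult_diff:
  fixes a b :: "'b \<Rightarrow> real"
  shows "(\<Sum>x\<in>A. a x * (b x - r)) = (\<Sum>x\<in>A. a x * b x) - r * (\<Sum>x\<in>A. a x)"
proof -
  have "(\<Sum>x\<in>A. a x * (b x - r)) = (\<Sum>x\<in>A. a x * b x - r * a x)"
    by (rule sum.cong) (simp_all add: algebra_simps)
  also have "\<dots> = (\<Sum>x\<in>A. a x * b x) - r * (\<Sum>x\<in>A. a x)"
    by (simp add: sum_subtractf sum_distrib_left)
  finally show ?thesis .
qed

context skel
begin

definition wm where "wm r c = vert (\<lambda>y. support_fn P y - r) c"
definition bR where "bR r u = Max ((\<lambda>c. u \<bullet> wm r c) ` Ch) + r"
definition RR where "RR r = {z. \<forall>u\<in>facet_normals P. u \<bullet> z \<le> bR r u}"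

lemma finite_Ch: "finite Ch" unfolding Ch_def by (rule finite_PiE) (use sk(2) in auto)

lemma wm_B: "c \<in> Ch \<Longrightarrow> y \<in> Bc c \<Longrightarrow> y \<bullet> wm r c = support_fn P y - r"
  unfolding wm_def using vert by blast

lemma wm_le:
  assumes c: "c \<in> Ch" and r: "\<forall>i<k. r \<le> Dd i" and y: "y \<in> Y"
  shows "y \<bullet> wm r c \<le> support_fn P y - r"
proof -
  obtain i where i: "i < k" "y \<in> Xs i" using y unfolding Y_def by blast
  show ?thesis
  proof (cases "y = c i")
    case False
    then have "y \<in> Bc c" using i unfolding Bc_def by blast
    then show ?thesis using wm_B[OF c] by simp
  next
    case True
    define w where "w = wm r c"
    define cc where "cc = c i"
    define h where "h = support_fn P"
    have ccX: "cc \<in> Xs i" using Ch_mem[OF c i(1)] unfolding cc_def .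
    have fin: "finite (Xs i)" using sk(2)[OF i(1)] .
    define Oth where "Oth = Xs i - {cc}"
    have oth: "x \<bullet> w = h x - r" if "x \<in> Oth" for x
      using wm_B[OF c, of x r] that i unfolding Oth_def w_def cc_def h_def Bc_def by blast
    have "(\<Sum>x\<in>Xs i. al i x * (x \<bullet> w)) = (\<Sum>x\<in>Xs i. al i x *\<^sub>R x) \<bullet> w"
      by (simp add: inner_sum_left)
    also have "\<dots> = 0" using al(3)[OF i(1)] by simp
    finally have s0: "(\<Sum>x\<in>Xs i. al i x * (x \<bullet> w)) = 0" .
    have e1: "al i cc * (cc \<bullet> w) + (\<Sum>x\<in>Oth. al i x * (h x - r)) = 0"
    proof -
      have "(\<Sum>x\<in>Xs i. al i x * (x \<bullet> w)) = al i cc * (cc \<bullet> w) + (\<Sum>x\<in>Oth. al i x * (x \<bullet> w))"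
        unfolding Oth_def by (rule sum.remove[OF fin ccX])
      moreover have "(\<Sum>x\<in>Oth. al i x * (x \<bullet> w)) = (\<Sum>x\<in>Oth. al i x * (h x - r))"
        by (rule sum.cong[OF refl]) (simp add: oth)
      ultimately show ?thesis using s0 by simp
    qed
    have e2: "(\<Sum>x\<in>Oth. al i x * (h x - r)) = (\<Sum>x\<in>Oth. al i x * h x) - r * (\<Sum>x\<in>Oth. al i x)"
      by (rule sum_mult_diff)
    have e3: "Dd i = al i cc * h cc + (\<Sum>x\<in>Oth. al i x * h x)"
      unfolding Dd_def Oth_def h_def by (rule sum.remove[OF fin ccX])
    have e4: "al i cc + (\<Sum>x\<in>Oth. al i x) = 1"
      using al(2)[OF i(1)] sum.remove[OF fin ccX, of "al i"] unfolding Oth_def by simp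
    then have e4': "al i cc * r + r * (\<Sum>x\<in>Oth. al i x) = r"
      by (metis distrib_left mult.commute mult.right_neutral)
    have "al i cc * (h cc - r - cc \<bullet> w) = al i cc * h cc - al i cc * r - al i cc * (cc \<bullet> w)"
      by (simp add: right_diff_distrib)
    also have "\<dots> = Dd i - r" using e1 e2 e3 e4' by linarith
    finally have key: "al i cc * (h cc - r - cc \<bullet> w) = Dd i - r" .
    have "0 \<le> Dd i - r" using r i by simp
    moreover have "0 < al i cc" using al(1)[OF i(1)] ccX by blast
    ultimately have "0 \<le> h cc - r - cc \<bullet> w" using key by (metis zero_le_mult_iff not_le)
    then show ?thesis using True unfolding cc_def w_def h_def by simp
  qed
qed

lemma Ch_avoid:
  assumes y: "y \<in> Y" shows "\<exists>c\<in>Ch. y \<in> Bc c"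
proof -
  obtain i where i: "i < k" "y \<in> Xs i" using y unfolding Y_def by blast
  obtain y' where y': "y' \<in> Xs i" "y' \<noteq> y" using two[OF i] by blast
  obtain c0 where c0: "c0 \<in> Ch" using Ch_ne by blast
  define c where "c = restrict (\<lambda>j. if j = i then y' else c0 j) {..<k}"
  have "c \<in> Ch" unfolding c_def Ch_def restrict_PiE_iff
    using y' Ch_mem[OF c0] by auto
  moreover have "c i = y'" unfolding c_def using i by simp
  then have "y \<in> Bc c" using i y' unfolding Bc_def by blast
  ultimately show ?thesis by blast
qed

lemma bR_Y:
  assumes r: "\<forall>i<k. r \<le> Dd i" and y: "y \<in> Y"
  shows "bR r y = support_fn P y"
proof -
  obtain c where c: "c \<in> Ch" "y \<in> Bc c" using Ch_avoid[OF y] by blast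
  have "Max ((\<lambda>c. y \<bullet> wm r c) ` Ch) = support_fn P y - r"
  proof (rule Max_eqI)
    show "finite ((\<lambda>c. y \<bullet> wm r c) ` Ch)" using finite_Ch by simp
    show "\<And>t. t \<in> (\<lambda>c. y \<bullet> wm r c) ` Ch \<Longrightarrow> t \<le> support_fn P y - r"
      using wm_le[OF _ r y] by blast
    have "y \<bullet> wm r c = support_fn P y - r" by (rule wm_B[OF c])
    then show "support_fn P y - r \<in> (\<lambda>c. y \<bullet> wm r c) ` Ch"
      by (rule image_eqI[OF sym c(1)])
  qed
  then show ?thesis unfolding bR_def by simp
qed

definition lc where
  "lc u = (SOME p. snd p \<in> Ch \<and> (\<forall>y. 0 \<le> fst p y) \<and> (\<forall>y. fst p y \<noteq> 0 \<longrightarrow> y \<in> Bc (snd p))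
              \<and> u = (\<Sum>y\<in>Y. fst p y *\<^sub>R y))"
definition lu where "lu u = fst (lc u)"
definition cu where "cu u = snd (lc u)"

lemma lu:
  "cu u \<in> Ch" "0 \<le> lu u y" "lu u y \<noteq> 0 \<Longrightarrow> y \<in> Bc (cu u)" "(\<Sum>y\<in>Y. lu u y *\<^sub>R y) = u"
proof -
  have ex: "\<exists>p. snd p \<in> Ch \<and> (\<forall>y. 0 \<le> fst p y) \<and> (\<forall>y. fst p y \<noteq> 0 \<longrightarrow> y \<in> Bc (snd p))
              \<and> u = (\<Sum>y\<in>Y. fst p y *\<^sub>R y)"
  proof -
    obtain l c where "c \<in> Ch \<and> (\<forall>y. 0 \<le> l y) \<and> (\<forall>y. l y \<noteq> 0 \<longrightarrow> y \<in> Bc c) \<and> u = (\<Sum>y\<in>Y. l y *\<^sub>R y)"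
      using rep[of u] by blast
    then show ?thesis by (intro exI[of _ "(l, c)"]) simp
  qed
  have s: "snd (lc u) \<in> Ch \<and> (\<forall>y. 0 \<le> fst (lc u) y) \<and> (\<forall>y. fst (lc u) y \<noteq> 0 \<longrightarrow> y \<in> Bc (snd (lc u)))
              \<and> u = (\<Sum>y\<in>Y. fst (lc u) y *\<^sub>R y)"
    unfolding lc_def by (rule someI_ex[OF ex])
  show "cu u \<in> Ch" "0 \<le> lu u y" "lu u y \<noteq> 0 \<Longrightarrow> y \<in> Bc (cu u)"
    using s unfolding lu_def cu_def by auto
  show "(\<Sum>y\<in>Y. lu u y *\<^sub>R y) = u" using s unfolding lu_def by simp
qed

lemma inner_lu: "u \<bullet> z = (\<Sum>y\<in>Y. lu u y * (y \<bullet> z))"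
proof -
  have "u \<bullet> z = (\<Sum>y\<in>Y. lu u y *\<^sub>R y) \<bullet> z" by (simp only: lu(4))
  also have "\<dots> = (\<Sum>y\<in>Y. lu u y * (y \<bullet> z))" by (simp add: inner_sum_left)
  finally show ?thesis .
qed

lemma sum_lu_ge1:
  assumes u: "u \<in> facet_normals P" shows "1 \<le> (\<Sum>y\<in>Y. lu u y)"
proof -
  have "1 = norm u" using fn_mem(1)[OF u] by simp
  also have "\<dots> = norm (\<Sum>y\<in>Y. lu u y *\<^sub>R y)" by (simp only: lu(4))
  also have "\<dots> \<le> (\<Sum>y\<in>Y. norm (lu u y *\<^sub>R y))" by (rule norm_sum)
  also have "\<dots> = (\<Sum>y\<in>Y. lu u y)"
  proof (rule sum.cong[OF refl])
    fix y assume "y \<in> Y"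
    then have "norm y = 1" using Y_sub fn_mem(1) by blast
    then show "norm (lu u y *\<^sub>R y) = lu u y" using lu(2)[of u y] by simp
  qed
  finally show ?thesis .
qed

definition be where "be u = (\<Sum>y\<in>Y. lu u y * support_fn P y)"

lemma lu_wm:
  assumes c: "c \<in> Ch" and r: "\<forall>i<k. r \<le> Dd i"
  shows "u \<bullet> wm r c \<le> be u - r * (\<Sum>y\<in>Y. lu u y)"
proof -
  have "u \<bullet> wm r c = (\<Sum>y\<in>Y. lu u y * (y \<bullet> wm r c))" by (rule inner_lu)
  also have "\<dots> \<le> (\<Sum>y\<in>Y. lu u y * (support_fn P y - r))"
    by (rule sum_mono, rule mult_left_mono) (use wm_le[OF c r] lu(2) in auto)
  also have "\<dots> = be u - r * (\<Sum>y\<in>Y. lu u y)"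
    unfolding be_def by (rule sum_mult_diff)
  finally show ?thesis .
qed

lemma lu_wm_eq: "u \<bullet> wm r (cu u) = be u - r * (\<Sum>y\<in>Y. lu u y)"
proof -
  have "u \<bullet> wm r (cu u) = (\<Sum>y\<in>Y. lu u y * (y \<bullet> wm r (cu u)))" by (rule inner_lu)
  also have "\<dots> = (\<Sum>y\<in>Y. lu u y * (support_fn P y - r))"
  proof (rule sum.cong[OF refl])
    fix y assume "y \<in> Y"
    show "lu u y * (y \<bullet> wm r (cu u)) = lu u y * (support_fn P y - r)"
    proof (cases "lu u y = 0")
      case False
      then show ?thesis using wm_B[OF lu(1) lu(3)[OF False]] by simp
    qed simp
  qed
  also have "\<dots> = be u - r * (\<Sum>y\<in>Y. lu u y)"
    unfolding be_def by (rule sum_mult_diff)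
  finally show ?thesis .
qed

lemma bR_bounds:
  assumes r: "\<forall>i<k. r \<le> Dd i" and u: "u \<in> facet_normals P"
  shows "bR r u \<le> be u + r - r * (\<Sum>y\<in>Y. lu u y)" "be u + r - r * (\<Sum>y\<in>Y. lu u y) \<le> bR r u"
proof -
  have fin: "finite ((\<lambda>c. u \<bullet> wm r c) ` Ch)" using finite_Ch by simp
  have ne: "(\<lambda>c. u \<bullet> wm r c) ` Ch \<noteq> {}" using Ch_ne by simp
  have "Max ((\<lambda>c. u \<bullet> wm r c) ` Ch) \<le> be u - r * (\<Sum>y\<in>Y. lu u y)"
    using lu_wm[OF _ r] by (subst Max_le_iff[OF fin ne]) blast
  then show "bR r u \<le> be u + r - r * (\<Sum>y\<in>Y. lu u y)" unfolding bR_def by simp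
  have "u \<bullet> wm r (cu u) \<le> Max ((\<lambda>c. u \<bullet> wm r c) ` Ch)"
    using lu(1) fin by (intro Max_ge) auto
  then show "be u + r - r * (\<Sum>y\<in>Y. lu u y) \<le> bR r u" unfolding bR_def using lu_wm_eq by simp
qed

end


context skel
begin

lemma Max_att: "\<exists>c\<in>Ch. u \<bullet> wm r c = Max ((\<lambda>c. u \<bullet> wm r c) ` Ch)"
proof -
  have "Max ((\<lambda>c. u \<bullet> wm r c) ` Ch) \<in> (\<lambda>c. u \<bullet> wm r c) ` Ch"
    using finite_Ch Ch_ne by (intro Max_in) auto
  then show ?thesis by force
qed

lemma Max_ge': "c \<in> Ch \<Longrightarrow> u \<bullet> wm r c \<le> Max ((\<lambda>c. u \<bullet> wm r c) ` Ch)"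
  using finite_Ch by (intro Max_ge) auto

lemma touch:
  assumes r: "0 < r" and u: "u \<in> facet_normals P"
  shows "\<exists>z. u \<bullet> z = bR r u \<and> (\<forall>u'\<in>facet_normals P. u' \<noteq> u \<longrightarrow> u' \<bullet> z < bR r u')"
proof -
  obtain c where c: "c \<in> Ch" "u \<bullet> wm r c = Max ((\<lambda>c. u \<bullet> wm r c) ` Ch)" using Max_att by blast
  define z where "z = wm r c + r *\<^sub>R u"
  have uu: "u \<bullet> u = 1" using fn_mem(1)[OF u] by (simp add: dot_square_norm)
  have "u \<bullet> z = bR r u" unfolding z_def bR_def using c uu by (simp add: inner_add_right)
  moreover have "u' \<bullet> z < bR r u'" if u': "u' \<in> facet_normals P" "u' \<noteq> u" for u'
  proof -
    have "u' \<bullet> u < 1" by (rule unit_inner_lt[OF fn_mem(1)[OF u] fn_mem(1)[OF u'(1)] u'(2)])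
    then have "r * (u' \<bullet> u) < r * 1" using r by (intro mult_strict_left_mono) auto
    moreover have "u' \<bullet> wm r c \<le> Max ((\<lambda>c. u' \<bullet> wm r c) ` Ch)" by (rule Max_ge'[OF c(1)])
    ultimately show ?thesis unfolding z_def bR_def by (simp add: inner_add_right)
  qed
  ultimately show ?thesis by blast
qed

lemma RR_eq: "RR r = (\<Inter>u\<in>facet_normals P. {z. u \<bullet> z \<le> bR r u})"
  unfolding RR_def by auto

lemma RR_convex: "convex (RR r)"
  unfolding RR_eq by (intro convex_INT convex_halfspace_le)

lemma RR_interior:
  assumes r: "0 < r" shows "interior (RR r) \<noteq> {}"
proof -
  obtain c0 where c0: "c0 \<in> Ch" using Ch_ne by blast
  define p where "p = wm r c0"
  have "ball p r \<subseteq> RR r"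
  proof
    fix x assume "x \<in> ball p r"
    then have x: "norm (x - p) < r" by (simp add: dist_norm norm_minus_commute)
    have "u \<bullet> x \<le> bR r u" if u: "u \<in> facet_normals P" for u
    proof -
      have "u \<bullet> (x - p) \<le> norm u * norm (x - p)" by (rule norm_cauchy_schwarz)
      also have "\<dots> = norm (x - p)" using fn_mem(1)[OF u] by simp
      finally have "u \<bullet> x \<le> u \<bullet> p + norm (x - p)" by (simp add: inner_diff_right)
      moreover have "u \<bullet> p \<le> Max ((\<lambda>c. u \<bullet> wm r c) ` Ch)" unfolding p_def by (rule Max_ge'[OF c0])
      ultimately show ?thesis using x unfolding bR_def by simp
    qed
    then show "x \<in> RR r" unfolding RR_def by blast
  qed
  then have "p \<in> interior (RR r)" using r mem_interior by blast
  then show ?thesis by blast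
qed

lemma RR_full: "0 < r \<Longrightarrow> aff_dim (RR r) = int DIM('a)"
  by (rule aff_dim_nonempty_interior[OF RR_interior])

lemma RR_le_be:
  assumes r: "\<forall>i<k. r \<le> Dd i" and z: "z \<in> RR r"
  shows "v \<bullet> z \<le> be v"
proof -
  have "v \<bullet> z = (\<Sum>y\<in>Y. lu v y * (y \<bullet> z))" by (rule inner_lu)
  also have "\<dots> \<le> (\<Sum>y\<in>Y. lu v y * support_fn P y)"
  proof (rule sum_mono, rule mult_left_mono)
    fix y assume y: "y \<in> Y"
    have "y \<bullet> z \<le> bR r y" using z Y_sub y unfolding RR_def by blast
    then show "y \<bullet> z \<le> support_fn P y" using bR_Y[OF r y] by simp
  qed (rule lu(2))
  finally show ?thesis unfolding be_def .
qed

lemma RR_bounded: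
  assumes r: "\<forall>i<k. r \<le> Dd i" shows "bounded (RR r)"
  unfolding bounded_iff
proof (intro exI ballI)
  fix z assume z: "z \<in> RR r"
  have "norm z \<le> (\<Sum>e\<in>Basis. \<bar>z \<bullet> e\<bar>)" by (rule norm_le_l1)
  also have "\<dots> \<le> (\<Sum>e\<in>Basis. \<bar>be e\<bar> + \<bar>be (- e)\<bar>)"
  proof (rule sum_mono)
    fix e :: 'a
    have "e \<bullet> z \<le> be e" by (rule RR_le_be[OF r z])
    moreover have "(- e) \<bullet> z \<le> be (- e)" by (rule RR_le_be[OF r z])
    ultimately have "e \<bullet> z \<le> \<bar>be e\<bar> + \<bar>be (- e)\<bar>" "- (e \<bullet> z) \<le> \<bar>be e\<bar> + \<bar>be (- e)\<bar>"
      using abs_ge_self[of "be e"] abs_ge_self[of "be (-e)"] abs_ge_zero[of "be e"] abs_ge_zero[of "be (-e)"]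
      by (simp_all add: inner_minus_left)
    then show "\<bar>z \<bullet> e\<bar> \<le> \<bar>be e\<bar> + \<bar>be (- e)\<bar>" by (simp add: inner_commute abs_le_iff)
  qed
  finally show "norm z \<le> (\<Sum>e\<in>Basis. \<bar>be e\<bar> + \<bar>be (- e)\<bar>)" .
qed

lemma RR_polytope:
  assumes r: "\<forall>i<k. r \<le> Dd i" shows "polytope (RR r)"
proof -
  have "polyhedron (RR r)" unfolding RR_eq
    by (rule polyhedron_Inter) (use finite_fn in \<open>auto intro: polyhedron_halfspace_le\<close>)
  then show ?thesis using RR_bounded[OF r] polytope_eq_bounded_polyhedron by blast
qed

lemma RR_support:
  assumes r: "0 < r" and u: "u \<in> facet_normals P"
  shows "support_fn (RR r) u = bR r u"
proof -
  obtain z where z: "u \<bullet> z = bR r u" "\<forall>u'\<in>facet_normals P. u' \<noteq> u \<longrightarrow> u' \<bullet> z < bR r u'"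
    using touch[OF r u] by blast
  have zR: "z \<in> RR r" unfolding RR_def using z by fastforce
  show ?thesis unfolding support_fn_def
  proof (rule cSup_eq_maximum)
    show "bR r u \<in> (\<lambda>x. u \<bullet> x) ` RR r" using zR z(1) by (metis image_eqI)
  next
    fix t assume "t \<in> (\<lambda>x. u \<bullet> x) ` RR r"
    then show "t \<le> bR r u" using u unfolding RR_def by auto
  qed
qed

lemma RR_facet:
  assumes r: "0 < r" and u: "u \<in> facet_normals P"
  shows "(RR r \<inter> {x. u \<bullet> x = bR r u}) facet_of RR r"
proof -
  define G where "G = RR r \<inter> {x. u \<bullet> x = bR r u}"
  define H where "H = {x. u \<bullet> x = bR r u}"
  obtain z where z: "u \<bullet> z = bR r u" "\<forall>u'\<in>facet_normals P. u' \<noteq> u \<longrightarrow> u' \<bullet> z < bR r u'"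
    using touch[OF r u] by blast
  have zR: "z \<in> RR r" unfolding RR_def using z by fastforce
  have face: "G face_of RR r" unfolding G_def
    by (rule face_of_Int_supporting_hyperplane_le[OF RR_convex]) (auto simp: RR_def u)
  have ne: "G \<noteq> {}" using zR z unfolding G_def by blast
  obtain d where d: "d > 0" "\<forall>x. norm (x - z) < d \<longrightarrow> (\<forall>u'\<in>facet_normals P - {u}. u' \<bullet> x < bR r u')"
    using strict_ball[of "facet_normals P - {u}" z "bR r"] finite_fn z(2) fn_mem(1) by auto
  have sub: "H \<inter> ball z d \<subseteq> G"
  proof
    fix x assume x: "x \<in> H \<inter> ball z d"
    then have "norm (x - z) < d" by (simp add: dist_norm norm_minus_commute)
    then have st: "\<forall>u'\<in>facet_normals P - {u}. u' \<bullet> x < bR r u'" using d by blast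
    have "\<forall>u'\<in>facet_normals P. u' \<bullet> x \<le> bR r u'"
    proof
      fix u' assume u': "u' \<in> facet_normals P"
      show "u' \<bullet> x \<le> bR r u'"
      proof (cases "u' = u")
        case True then show ?thesis using x unfolding H_def by simp
      next
        case False then show ?thesis using st u' by force
      qed
    qed
    then show "x \<in> G" using x unfolding G_def H_def RR_def by blast
  qed
  have u0: "u \<noteq> 0" using fn_mem(1)[OF u] by auto
  have "aff_dim (H \<inter> ball z d) = aff_dim H"
    unfolding H_def by (rule aff_dim_convex_Int_open) (use z d in \<open>auto simp: convex_hyperplane\<close>)
  also have "\<dots> = int (DIM('a) - 1)" unfolding H_def by (rule aff_dim_hyperplane[OF u0])
  finally have a1: "aff_dim (H \<inter> ball z d) = int (DIM('a) - 1)" .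
  have "aff_dim G \<le> aff_dim H" by (rule aff_dim_subset) (auto simp: G_def H_def)
  moreover have "aff_dim (H \<inter> ball z d) \<le> aff_dim G" by (rule aff_dim_subset[OF sub])
  ultimately have "aff_dim G = int (DIM('a) - 1)" using a1 aff_dim_hyperplane[OF u0] unfolding H_def by simp
  then have "aff_dim G = aff_dim (RR r) - 1" using RR_full[OF r] DIM_positive[where 'a='a] by simp
  then show ?thesis using face ne unfolding G_def facet_of_def by simp
qed

lemma RR_fn:
  assumes r: "0 < r"
  shows "facet_normals (RR r) = facet_normals P"
proof
  show "facet_normals P \<subseteq> facet_normals (RR r)"
  proof
    fix u assume u: "u \<in> facet_normals P"
    have "RR r \<subseteq> {x. u \<bullet> x \<le> bR r u}" unfolding RR_def using u by blast
    then show "u \<in> facet_normals (RR r)" unfolding facet_normals_def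
      using RR_facet[OF r u] fn_mem(1)[OF u] by blast
  qed
next
  show "facet_normals (RR r) \<subseteq> facet_normals P"
  proof
    fix u' assume "u' \<in> facet_normals (RR r)"
    then obtain F b' where F: "F facet_of RR r" "RR r \<subseteq> {x. u' \<bullet> x \<le> b'}" "F = RR r \<inter> {x. u' \<bullet> x = b'}"
      and nu': "norm u' = 1"
      unfolding facet_normals_def by blast
    have cF: "convex F" using F(1) face_of_imp_convex facet_of_imp_face_of by blast
    have "F \<noteq> {}" using F(1) by (simp add: facet_of_def)
    then obtain q where q: "q \<in> rel_interior F" using rel_interior_eq_empty[OF cF] by blast
    then have qF: "q \<in> F" using rel_interior_subset by blast
    have "\<exists>u\<in>facet_normals P. u \<bullet> q = bR r u"
    proof (rule ccontr)
      assume "\<not> (\<exists>u\<in>facet_normals P. u \<bullet> q = bR r u)"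
      moreover have "\<forall>u\<in>facet_normals P. u \<bullet> q \<le> bR r u" using qF F(3) unfolding RR_def by blast
      ultimately have "\<forall>u\<in>facet_normals P. norm u = 1 \<and> u \<bullet> q < bR r u"
        using fn_mem(1) by fastforce
      then obtain d where d: "d > 0" "\<forall>x. norm (x - q) < d \<longrightarrow> (\<forall>u\<in>facet_normals P. u \<bullet> x < bR r u)"
        using strict_ball[OF finite_fn] by blast
      define x where "x = q + (d/2) *\<^sub>R u'"
      have "norm (x - q) < d" unfolding x_def using d nu' by simp
      then have "x \<in> RR r" using d unfolding RR_def by fastforce
      then have "u' \<bullet> x \<le> b'" using F(2) by blast
      moreover have "u' \<bullet> q = b'" using qF F(3) by blast
      moreover have "u' \<bullet> u' = 1" using nu' by (simp add: dot_square_norm)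
      ultimately show False using d unfolding x_def by (simp add: inner_add_right)
    qed
    then obtain u where u: "u \<in> facet_normals P" "u \<bullet> q = bR r u" by blast
    define G where "G = RR r \<inter> {x. u \<bullet> x = bR r u}"
    have Gf: "G facet_of RR r" unfolding G_def by (rule RR_facet[OF r u(1)])
    have Gface: "G face_of RR r" using Gf facet_of_imp_face_of by blast
    have "F \<subseteq> G"
      by (rule subset_of_face_of[OF Gface]) (use F(3) q qF u(2) G_def in auto)
    have FG: "F = G"
    proof (rule ccontr)
      assume ne: "F \<noteq> G"
      have "F face_of G" using face_of_face[OF Gface] F(1) \<open>F \<subseteq> G\<close> facet_of_imp_face_of by blast
      then have "aff_dim F < aff_dim G" using face_of_aff_dim_lt[OF face_of_imp_convex[OF Gface]] ne by blast
      moreover have "aff_dim F = aff_dim (RR r) - 1" "aff_dim G = aff_dim (RR r) - 1"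
        using F(1) Gf by (auto simp: facet_of_def)
      ultimately show False by simp
    qed
    have "RR r \<subseteq> {x. u \<bullet> x \<le> bR r u}" unfolding RR_def using u(1) by blast
    then have "u' = u"
      using facet_normal_unique[OF RR_full[OF r] F(1) FG[unfolded G_def] _ F(3) F(2) fn_mem(1)[OF u(1)] nu']
      by blast
    then show "u' \<in> facet_normals P" using u(1) by simp
  qed
qed

end


context skel
begin

lemma Dm_ex: "\<exists>Dm>0. \<forall>i<k. Dm \<le> Dd i"
  using pos_lower_bound[of "{..<k}" Dd] Dd_pos by auto

definition Dm where "Dm = (SOME Dm. Dm > 0 \<and> (\<forall>i<k. Dm \<le> Dd i))"

lemma Dm: "Dm > 0" "i < k \<Longrightarrow> Dm \<le> Dd i"
  using someI_ex[OF Dm_ex] unfolding Dm_def by auto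

definition good where
  "good r \<longleftrightarrow> 0 < r \<and> r \<le> Dm \<and>
     (\<forall>u\<in>facet_normals P. \<forall>y\<in>Y. 0 < lu u y \<longrightarrow> r * (\<Sum>y\<in>Y. lu u y) \<le> Dm * lu u y)"

lemma good_ex: "\<exists>r. good r"
proof -
  define S where "S = {p. fst p \<in> facet_normals P \<and> snd p \<in> Y \<and> 0 < lu (fst p) (snd p)}"
  have fS: "finite S"
    by (rule finite_subset[of _ "facet_normals P \<times> Y"]) (auto simp: S_def finite_fn finite_Y)
  define f where "f = (\<lambda>p. Dm * lu (fst p) (snd p) / (\<Sum>y\<in>Y. lu (fst p) y))"
  have "\<forall>p\<in>S. 0 < f p"
  proof
    fix p assume "p \<in> S"
    then have "fst p \<in> facet_normals P" "0 < lu (fst p) (snd p)" unfolding S_def by auto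
    moreover have "1 \<le> (\<Sum>y\<in>Y. lu (fst p) y)" by (rule sum_lu_ge1) fact
    ultimately show "0 < f p" unfolding f_def using Dm(1) by simp
  qed
  then obtain d where d: "d > 0" "\<forall>p\<in>S. d \<le> f p" using pos_lower_bound[OF fS] by blast
  define r where "r = min d Dm"
  have "good r" unfolding good_def
  proof (intro conjI ballI impI)
    show "0 < r" using d Dm(1) unfolding r_def by simp
    show "r \<le> Dm" unfolding r_def by simp
    fix u y assume u: "u \<in> facet_normals P" and y: "y \<in> Y" and l: "0 < lu u y"
    have pS: "(u, y) \<in> S" using u y l unfolding S_def by simp
    have s1: "1 \<le> (\<Sum>y\<in>Y. lu u y)" by (rule sum_lu_ge1[OF u])
    have "r \<le> Dm * lu u y / (\<Sum>y\<in>Y. lu u y)" using d(2) pS unfolding r_def f_def by force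
    then have "r * (\<Sum>y\<in>Y. lu u y) \<le> Dm * lu u y / (\<Sum>y\<in>Y. lu u y) * (\<Sum>y\<in>Y. lu u y)"
      using s1 by (intro mult_right_mono) auto
    also have "\<dots> = Dm * lu u y" using s1 by simp
    finally show "r * (\<Sum>y\<in>Y. lu u y) \<le> Dm * lu u y" .
  qed
  then show ?thesis by blast
qed

definition rho where "rho = (SOME r. good r)"

lemma rho: "good rho" unfolding rho_def by (rule someI_ex[OF good_ex])

lemma rho_Dd: "\<forall>i<k. rho \<le> Dd i" using rho Dm(2) unfolding good_def by force

lemma rho_pos: "0 < rho" using rho unfolding good_def by simp

lemma core_R:
  assumes x: "x \<in> RR rho"
  shows "\<exists>c\<in>Ch. \<forall>u\<in>facet_normals P. u \<bullet> x = bR rho u \<longrightarrow> bR rho u \<le> u \<bullet> vert (support_fn P) c"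
proof -
  define sl where "sl = (\<lambda>y. support_fn P y - y \<bullet> x)"
  have sl0: "0 \<le> sl y" if y: "y \<in> Y" for y
  proof -
    have "y \<bullet> x \<le> bR rho y" using x Y_sub y unfolding RR_def by blast
    then show ?thesis using bR_Y[OF rho_Dd y] unfolding sl_def by simp
  qed
  have ex: "\<forall>i\<in>{..<k}. \<exists>y. y \<in> Xs i \<and> Dm \<le> sl y"
  proof
    fix i assume "i \<in> {..<k}"
    then have i: "i < k" by simp
    show "\<exists>y. y \<in> Xs i \<and> Dm \<le> sl y"
    proof (rule ccontr)
      assume "\<not> (\<exists>y. y \<in> Xs i \<and> Dm \<le> sl y)"
      then have lt: "\<forall>y\<in>Xs i. sl y < Dd i" using Dm(2)[OF i] by force
      have "(\<Sum>y\<in>Xs i. al i y * sl y) < (\<Sum>y\<in>Xs i. al i y * Dd i)"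
      proof (rule sum_strict_mono[OF sk(2)[OF i] sk(3)[OF i]])
        fix y assume y: "y \<in> Xs i"
        then show "al i y * sl y < al i y * Dd i" using al(1)[OF i] lt by simp
      qed
      also have "\<dots> = Dd i" using al(2)[OF i] by (simp add: sum_distrib_right[symmetric])
      finally show False using slack_id[OF i, of x] unfolding sl_def by simp
    qed
  qed
  from bchoice[OF ex] obtain ys where ys: "\<forall>i\<in>{..<k}. ys i \<in> Xs i \<and> Dm \<le> sl (ys i)"
    by (rule exE)
  define c where "c = restrict ys {..<k}"
  have cC: "c \<in> Ch" unfolding c_def Ch_def restrict_PiE_iff using ys by blast
  have "bR rho u \<le> u \<bullet> vert (support_fn P) c"
    if u: "u \<in> facet_normals P" and act: "u \<bullet> x = bR rho u" for u
  proof -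
    have supp: "y \<in> Bc c" if ly: "lu u y \<noteq> 0" for y
    proof -
      have yB: "y \<in> Bc (cu u)" using lu(3)[OF ly] .
      then have yY: "y \<in> Y" using Bc_sub_Y by blast
      then obtain i where i: "i < k" "y \<in> Xs i" unfolding Y_def by blast
      have "y \<noteq> c i"
      proof
        assume yc: "y = c i"
        then have "Dm \<le> sl y" using ys i unfolding c_def by auto
        have lpos: "0 < lu u y" using ly lu(2)[of u y] by simp
        have "lu u y * sl y \<le> (\<Sum>y'\<in>Y. lu u y' * sl y')"
          by (rule member_le_sum[OF yY]) (use lu(2) sl0 finite_Y in auto)
        also have "\<dots> = be u - u \<bullet> x"
        proof -
          have "(\<Sum>y'\<in>Y. lu u y' * sl y') = (\<Sum>y'\<in>Y. lu u y' * support_fn P y') - (\<Sum>y'\<in>Y. lu u y' * (y' \<bullet> x))"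
            unfolding sl_def by (simp add: right_diff_distrib sum_subtractf)
          then show ?thesis using inner_lu[of u x] unfolding be_def by simp
        qed
        also have "\<dots> \<le> rho * (\<Sum>y\<in>Y. lu u y) - rho"
          using bR_bounds(2)[OF rho_Dd u] act by simp
        also have "\<dots> < rho * (\<Sum>y\<in>Y. lu u y)" using rho_pos by simp
        also have "\<dots> \<le> Dm * lu u y" using rho u yY lpos unfolding good_def by blast
        finally have "lu u y * sl y < Dm * lu u y" .
        moreover have "lu u y * Dm \<le> lu u y * sl y" using \<open>Dm \<le> sl y\<close> lpos by simp
        ultimately show False by (simp add: mult.commute)
      qed
      then show ?thesis using i unfolding Bc_def by blast
    qed
    have "u \<bullet> vert (support_fn P) c = (\<Sum>y\<in>Y. lu u y * (y \<bullet> vert (support_fn P) c))" by (rule inner_lu)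
    also have "\<dots> = be u" unfolding be_def
    proof (rule sum.cong[OF refl])
      fix y assume "y \<in> Y"
      show "lu u y * (y \<bullet> vert (support_fn P) c) = lu u y * support_fn P y"
      proof (cases "lu u y = 0")
        case False then show ?thesis using vert[OF cC] supp[OF False] by simp
      qed simp
    qed
    finally have "u \<bullet> vert (support_fn P) c = be u" .
    moreover have "bR rho u \<le> be u + rho - rho * (\<Sum>y\<in>Y. lu u y)" by (rule bR_bounds(1)[OF rho_Dd u])
    moreover have "rho \<le> rho * (\<Sum>y\<in>Y. lu u y)" using sum_lu_ge1[OF u] rho_pos by simp
    ultimately show ?thesis by simp
  qed
  then show ?thesis using cC by blast
qed

end


definition cov :: "'a::euclidean_space set \<Rightarrow> 'a \<Rightarrow> ('a \<Rightarrow> real)" where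
  "cov S z = (\<lambda>u. if u \<in> facet_normals S then sgn (u \<bullet> z - support_fn S u) else 0)"

lemma cov_mem: "cov S z \<in> arrangement_covectors S"
  unfolding arrangement_covectors_def cov_def by blast

lemma cov_ex: "f \<in> arrangement_covectors S \<Longrightarrow> \<exists>z. f = cov S z"
  unfolding arrangement_covectors_def cov_def by blast

lemma open_fin:
  fixes b :: "'a::euclidean_space \<Rightarrow> real"
  assumes "finite U" shows "open {z. \<forall>u\<in>U. u \<bullet> z < b u}"
proof -
  have "{z. \<forall>u\<in>U. u \<bullet> z < b u} = (\<Inter>u\<in>U. {z. u \<bullet> z < b u})" by auto
  moreover have "open (\<Inter>u\<in>U. {z. u \<bullet> z < b u})"
    using assms by (intro open_INT) (auto intro: open_halfspace_lt)
  ultimately show ?thesis by simp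
qed

lemma sgn_eq0: "sgn (a::real) = 0 \<longleftrightarrow> a = 0"
  by (cases "a = 0") (auto simp: sgn_if)

locale skel_sm = skel +
  assumes sm: "strongly_monotypic P"
begin

lemma arr_eq: "arrangement_covectors (RR rho) = arrangement_covectors P"
proof -
  have "polytope (RR rho) \<and> aff_dim (RR rho) = int DIM('a) \<and> facet_normals (RR rho) = facet_normals P"
    using RR_polytope[OF rho_Dd] RR_full[OF rho_pos] RR_fn[OF rho_pos] by blast
  then show ?thesis using sm unfolding strongly_monotypic_def by blast
qed

lemma cov_R:
  assumes u: "u \<in> facet_normals P"
  shows "cov (RR rho) z u = sgn (u \<bullet> z - bR rho u)"
  unfolding cov_def using RR_fn[OF rho_pos] RR_support[OF rho_pos u] u by simp

lemma cov_P:
  assumes u: "u \<in> facet_normals P"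
  shows "cov P z u = sgn (u \<bullet> z - support_fn P u)"
  unfolding cov_def using u by simp

lemma core_P:
  assumes x: "x \<in> P"
  shows "\<exists>c\<in>Ch. \<forall>u\<in>facet_normals P. u \<bullet> x = support_fn P u \<longrightarrow> support_fn P u \<le> u \<bullet> vert (support_fn P) c"
proof -
  have "cov P x \<in> arrangement_covectors (RR rho)" using cov_mem arr_eq by blast
  then obtain x' where x': "cov P x = cov (RR rho) x'" using cov_ex by blast
  have sx: "sgn (u \<bullet> x - support_fn P u) = sgn (u \<bullet> x' - bR rho u)" if u: "u \<in> facet_normals P" for u
    using fun_cong[OF x', of u] cov_R[OF u] cov_P[OF u] by simp
  have x'R: "x' \<in> RR rho" unfolding RR_def
  proof (intro CollectI ballI)
    fix u assume u: "u \<in> facet_normals P"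
    have "u \<bullet> x \<le> support_fn P u" using fn_mem(2)[OF u x] .
    then have "sgn (u \<bullet> x - support_fn P u) \<le> 0" by (simp add: sgn_le_0_iff)
    then have "sgn (u \<bullet> x' - bR rho u) \<le> 0" using sx[OF u] by simp
    then show "u \<bullet> x' \<le> bR rho u" by (simp add: sgn_le_0_iff)
  qed
  obtain c where c: "c \<in> Ch"
    and cc: "\<forall>u\<in>facet_normals P. u \<bullet> x' = bR rho u \<longrightarrow> bR rho u \<le> u \<bullet> vert (support_fn P) c"
    using core_R[OF x'R] by blast
  define w where "w = vert (support_fn P) c"
  have "cov (RR rho) w \<in> arrangement_covectors P" using cov_mem arr_eq by blast
  then obtain q where q: "cov (RR rho) w = cov P q" using cov_ex by blast
  have sw: "sgn (u \<bullet> w - bR rho u) = sgn (u \<bullet> q - support_fn P u)" if u: "u \<in> facet_normals P" for u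
    using fun_cong[OF q, of u] cov_R[OF u] cov_P[OF u] by simp
  have "\<forall>y\<in>Bc c. y \<bullet> q = support_fn P y"
  proof
    fix y assume y: "y \<in> Bc c"
    have yY: "y \<in> Y" using y Bc_sub_Y by blast
    have yX: "y \<in> facet_normals P" using yY Y_sub by blast
    have "y \<bullet> w = support_fn P y" using vert[OF c] y unfolding w_def by blast
    then have "y \<bullet> w - bR rho y = 0" using bR_Y[OF rho_Dd yY] by simp
    then have "sgn (y \<bullet> q - support_fn P y) = 0" using sw[OF yX] by simp
    then show "y \<bullet> q = support_fn P y" by (simp add: sgn_eq0)
  qed
  then have qw: "q = w" unfolding w_def using vert_eq[OF c] by simp
  have "support_fn P u \<le> u \<bullet> w" if u: "u \<in> facet_normals P" and act: "u \<bullet> x = support_fn P u" for u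
  proof -
    have "sgn (u \<bullet> x' - bR rho u) = 0" using sx[OF u] act by simp
    then have "u \<bullet> x' = bR rho u" by (simp add: sgn_eq0)
    then have "bR rho u \<le> u \<bullet> w" using cc u unfolding w_def by blast
    then have "0 \<le> sgn (u \<bullet> w - bR rho u)" by (simp add: zero_le_sgn_iff)
    then have "0 \<le> sgn (u \<bullet> w - support_fn P u)" using sw[OF u] qw by simp
    then show ?thesis by (simp add: zero_le_sgn_iff)
  qed
  then show ?thesis using c unfolding w_def by blast
qed

end


context skel_sm
begin

definition V where "V c = vert (support_fn P) c"

lemma M_ex: "\<exists>M\<ge>0. \<forall>c\<in>Ch. \<forall>u\<in>facet_normals P. support_fn P u - u \<bullet> V c \<le> M"
proof -
  define M where "M = (\<Sum>c\<in>Ch. \<Sum>u\<in>facet_normals P. \<bar>support_fn P u - u \<bullet> V c\<bar>)"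
  have "support_fn P u - u \<bullet> V c \<le> M" if c: "c \<in> Ch" and u: "u \<in> facet_normals P" for c u
  proof -
    have "support_fn P u - u \<bullet> V c \<le> \<bar>support_fn P u - u \<bullet> V c\<bar>" by simp
    also have "\<dots> \<le> (\<Sum>u\<in>facet_normals P. \<bar>support_fn P u - u \<bullet> V c\<bar>)"
      by (rule member_le_sum[OF u]) (auto simp: finite_fn)
    also have "\<dots> \<le> M" unfolding M_def
      by (rule member_le_sum[OF c, of "\<lambda>c. \<Sum>u\<in>facet_normals P. \<bar>support_fn P u - u \<bullet> V c\<bar>"]) (auto simp: finite_Ch intro: sum_nonneg)
    finally show ?thesis .
  qed
  moreover have "0 \<le> M" unfolding M_def by (intro sum_nonneg) auto
  ultimately show ?thesis by blast
qed

definition Uc where "Uc c = {u \<in> facet_normals P. u \<bullet> V c < support_fn P u}"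

lemma eta_ex: "\<exists>eta>0. \<forall>z\<in>P. \<exists>c\<in>Ch. \<forall>u\<in>Uc c. eta \<le> support_fn P u - u \<bullet> z"
proof -
  define f where "f = (\<lambda>p::(nat \<Rightarrow> 'a) \<times> nat. {z. \<forall>u\<in>Uc (fst p). u \<bullet> z < support_fn P u - inverse (real (Suc (snd p)))})"
  have fU: "finite (Uc c)" for c unfolding Uc_def using finite_fn by simp
  have op: "open (f p)" for p unfolding f_def by (rule open_fin[OF fU])
  have cov: "P \<subseteq> (\<Union>p\<in>Ch \<times> UNIV. f p)"
  proof
    fix z assume z: "z \<in> P"
    have "\<exists>c\<in>Ch. \<forall>u\<in>facet_normals P. u \<bullet> z = support_fn P u \<longrightarrow> support_fn P u \<le> u \<bullet> V c"
      using core_P[OF z] unfolding V_def .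
    then obtain c where c: "c \<in> Ch" "\<forall>u\<in>facet_normals P. u \<bullet> z = support_fn P u \<longrightarrow> support_fn P u \<le> u \<bullet> V c"
      by (rule bexE)
    have "\<forall>u\<in>Uc c. 0 < support_fn P u - u \<bullet> z"
    proof
      fix u assume u: "u \<in> Uc c"
      then have uX: "u \<in> facet_normals P" and lt: "u \<bullet> V c < support_fn P u" unfolding Uc_def by auto
      have "u \<bullet> z \<le> support_fn P u" using fn_mem(2)[OF uX z] .
      moreover have "u \<bullet> z \<noteq> support_fn P u"
      proof
        assume "u \<bullet> z = support_fn P u"
        then have "support_fn P u \<le> u \<bullet> V c" using c(2) uX by blast
        then show False using lt by simp
      qed
      ultimately show "0 < support_fn P u - u \<bullet> z" by simp
    qed
    then have "\<exists>d>0. \<forall>u\<in>Uc c. d \<le> support_fn P u - u \<bullet> z"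
      by (rule pos_lower_bound[OF fU, of c "\<lambda>u. support_fn P u - u \<bullet> z"])
    then obtain d where d: "d > 0" "\<forall>u\<in>Uc c. d \<le> support_fn P u - u \<bullet> z" by blast
    obtain n where n: "n \<noteq> 0" "inverse (real n) < d"
      using iffD1[OF real_arch_inverse[of d] d(1)] by blast
    have "Suc (n - 1) = n" using n(1) by simp
    then have inv: "inverse (real (Suc (n - 1))) < d" using n(2) by simp
    have "\<forall>u\<in>Uc c. u \<bullet> z < support_fn P u - inverse (real (Suc (n - 1)))"
    proof
      fix u assume "u \<in> Uc c"
      then have "d \<le> support_fn P u - u \<bullet> z" using d(2) by blast
      then show "u \<bullet> z < support_fn P u - inverse (real (Suc (n - 1)))" using inv by linarith
    qed
    then have zf: "z \<in> f (c, n - 1)" unfolding f_def by simp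
    have "(c, n - 1) \<in> Ch \<times> UNIV" using c(1) by simp
    then show "z \<in> (\<Union>p\<in>Ch \<times> UNIV. f p)" using zf by (rule UN_I)
  qed
  obtain C' where C': "C' \<subseteq> Ch \<times> UNIV" "finite C'" "P \<subseteq> (\<Union>p\<in>C'. f p)"
    by (rule compactE_image[OF polytope_imp_compact[OF poly] op cov])
  have C'ne: "C' \<noteq> {}" using C'(3) P_nonempty by blast
  define N where "N = Max (snd ` C')"
  define eta where "eta = inverse (real (Suc N))"
  have "0 < eta" unfolding eta_def by simp
  moreover have "\<exists>c\<in>Ch. \<forall>u\<in>Uc c. eta \<le> support_fn P u - u \<bullet> z" if z: "z \<in> P" for z
  proof -
    obtain p where p: "p \<in> C'" "z \<in> f p" using C'(3) z by blast
    have "snd p \<le> N" unfolding N_def using C'(2) p(1) by (intro Max_ge) auto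
    then have le: "eta \<le> inverse (real (Suc (snd p)))" unfolding eta_def
      by (intro le_imp_inverse_le) auto
    have "fst p \<in> Ch" using p(1) C'(1) by auto
    moreover have "\<forall>u\<in>Uc (fst p). eta \<le> support_fn P u - u \<bullet> z"
    proof
      fix u assume u: "u \<in> Uc (fst p)"
      have "u \<bullet> z < support_fn P u - inverse (real (Suc (snd p)))"
        using p(2) u unfolding f_def by blast
      then show "eta \<le> support_fn P u - u \<bullet> z" using le by linarith
    qed
    ultimately show ?thesis by blast
  qed
  ultimately show ?thesis by blast
qed

lemma cover:
  "\<exists>\<epsilon>>0. \<epsilon> < 1 \<and> (\<exists>T. finite T \<and> card T \<le> (\<Prod>i<k. card (Xs i)) \<and>
            P \<subseteq> (\<Union>t\<in>T. (\<lambda>x. t + (1 - \<epsilon>) *\<^sub>R x) ` P))"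
proof -
  obtain M where M: "M \<ge> 0" "\<forall>c\<in>Ch. \<forall>u\<in>facet_normals P. support_fn P u - u \<bullet> V c \<le> M"
    using M_ex by blast
  obtain eta where eta: "eta > 0" "\<forall>z\<in>P. \<exists>c\<in>Ch. \<forall>u\<in>Uc c. eta \<le> support_fn P u - u \<bullet> z"
    using eta_ex by blast
  define e where "e = min (1/2) (eta / (M + 1))"
  have e0: "0 < e" unfolding e_def using eta M by simp
  have e1: "e < 1" unfolding e_def by simp
  have "e \<le> eta / (M + 1)" unfolding e_def by simp
  then have "e * (M + 1) \<le> eta / (M + 1) * (M + 1)" using M(1) by (intro mult_right_mono) auto
  then have eM: "e * (M + 1) \<le> eta" using M(1) by simp
  define T where "T = (\<lambda>c. e *\<^sub>R V c) ` Ch"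
  have fT: "finite T" unfolding T_def using finite_Ch by simp
  have cT: "card T \<le> (\<Prod>i<k. card (Xs i))"
  proof -
    have "card T \<le> card Ch" unfolding T_def by (rule card_image_le[OF finite_Ch])
    also have "card Ch = (\<Prod>i<k. card (Xs i))" unfolding Ch_def by (simp add: card_PiE)
    finally show ?thesis .
  qed
  have "P \<subseteq> (\<Union>t\<in>T. (\<lambda>x. t + (1 - e) *\<^sub>R x) ` P)"
  proof
    fix z assume z: "z \<in> P"
    obtain c where c: "c \<in> Ch" "\<forall>u\<in>Uc c. eta \<le> support_fn P u - u \<bullet> z" using eta(2) z by blast
    define p where "p = inverse (1 - e) *\<^sub>R (z - e *\<^sub>R V c)"
    have ne: "1 - e \<noteq> 0" using e1 by simp
    have zp: "z = e *\<^sub>R V c + (1 - e) *\<^sub>R p" unfolding p_def using ne by simp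
    have "p \<in> P"
    proof -
      have "u \<bullet> p \<le> support_fn P u" if u: "u \<in> facet_normals P" for u
      proof -
        have hz: "u \<bullet> z \<le> support_fn P u" using fn_mem(2)[OF u z] .
        have key: "e * (support_fn P u - u \<bullet> V c) \<le> support_fn P u - u \<bullet> z"
        proof (cases "u \<bullet> V c < support_fn P u")
          case True
          then have "u \<in> Uc c" unfolding Uc_def using u by simp
          then have "eta \<le> support_fn P u - u \<bullet> z" using c(2) by blast
          moreover have "e * (support_fn P u - u \<bullet> V c) \<le> e * (M + 1)"
            using M(2) c(1) u e0 by (intro mult_left_mono) force+
          ultimately show ?thesis using eM by linarith
        next
          case False
          then have "e * (support_fn P u - u \<bullet> V c) \<le> 0" using e0 by (simp add: mult_nonneg_nonpos)
          then show ?thesis using hz by linarith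
        qed
        have "u \<bullet> p = inverse (1 - e) * (u \<bullet> z - e * (u \<bullet> V c))"
          unfolding p_def by (simp add: inner_diff_right)
        also have "\<dots> \<le> inverse (1 - e) * ((1 - e) * support_fn P u)"
          using key e1 by (intro mult_left_mono) (auto simp: algebra_simps)
        also have "\<dots> = support_fn P u" using ne by simp
        finally show ?thesis .
      qed
      then show ?thesis using P_rep by blast
    qed
    then have "z \<in> (\<lambda>x. e *\<^sub>R V c + (1 - e) *\<^sub>R x) ` P" using zp by blast
    moreover have "e *\<^sub>R V c \<in> T" unfolding T_def using c(1) by blast
    ultimately show "z \<in> (\<Union>t\<in>T. (\<lambda>x. t + (1 - e) *\<^sub>R x) ` P)" by blast
  qed
  then show ?thesis using e0 e1 fT cT by blast
qed

end

theorem theorem1p4: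
  fixes P :: "'a::euclidean_space set" and k :: nat and Xs :: "nat \<Rightarrow> 'a set"
  assumes "polytope P" and "aff_dim P = int DIM('a)"
    and "strongly_monotypic P"
    and "is_skeleton (facet_normals P) k Xs"
  shows "(\<Prod>i<k. card (Xs i)) \<le> 2 ^ DIM('a) \<and>
    (\<exists>\<epsilon>>0. \<epsilon> < 1 \<and> (\<exists>T. finite T \<and> card T \<le> (\<Prod>i<k. card (Xs i)) \<and>
            P \<subseteq> (\<Union>t\<in>T. (\<lambda>x. t + (1 - \<epsilon>) *\<^sub>R x) ` P)))"
proof -
  interpret skel_sm P k Xs
    by unfold_locales (use assms in auto)
  show ?thesis using prod_bound cover by blast
qed


end
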